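(* Let $\bar Z\in\mathbb{R}^{C\times T\times m}$ be a collection of $m$ multi-channel signals $\bar z^1,\dots,\bar z^m\in\mathbb{R}^{C\times T}$, let $\alpha>0$, and for $j=1,\dots,k$ let $\alpha_j>0$, $\gamma_j\in\mathbb{R}$ and $\Pi^j$ be a nonnegative diagonal $m\times m$ matrix; set $\bar\Pi^j=\Pi^j\otimes I_T$. For each frequency $p\in\{0,\dots,T-1\}$ define $$\bar{\mathcal E}(p)=\alpha\big[I_C+\alpha\,\mathrm{DFT}(\bar Z)(p)\,\mathrm{DFT}(\bar Z)(p)^*\big]^{-1},\qquad \bar{\mathcal C}^j(p)=\alpha_j\big[I_C+\alpha_j\,\mathrm{DFT}(\bar Z)(p)\,\Pi^j\,\mathrm{DFT}(\bar Z)(p)^*\big]^{-1},$$ and $\bar U(p)=\bar{\mathcal E}(p)\,\mathrm{DFT}(\bar Z)(p)$, $\bar W^j(p)=\bar{\mathcal C}^j(p)\,\mathrm{DFT}(\bar Z)(p)$ (each in $\mathbb{C}^{C\times m}$), giving arrays $\bar U,\bar W^j\in\mathbb{C}^{C\times T\times m}$. Then the gradients with respect to the real array $\bar Z$ satisfy $$\frac{1}{2T}\frac{\partial\log\det\big(I+\alpha\,\mathsf{circ}(\bar Z)\mathsf{circ}(\bar Z)^*\big)}{\partial\bar Z}=\mathrm{IDFT}(\bar U),\qquad \frac{\gamma_j}{2T}\frac{\partial\log\det\big(I+\alpha_j\,\mathsf{circ}(\bar Z)\bar\Pi^j\mathsf{circ}(\bar Z)^*\big)}{\partial\bar Z}=\gamma_j\,\mathrm{IDFT}(\bar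 W^j\Pi^j),$$ where $\bar W^j\Pi^j$ denotes multiplying, at each frequency $p$, the $C\times m$ slice $\bar W^j(p)$ on the right by $\Pi^j$.
   Context: For $v\in\mathbb{R}^T$ (indices $t\in\{0,\dots,T-1\}$), $\mathsf{circ}(v)\in\mathbb{R}^{T\times T}$ has entries $v((a-b)\bmod T)$. For $\bar z\in\mathbb{R}^{C\times T}$ with channels $\bar z[c]\in\mathbb{R}^T$, $\mathsf{circ}(\bar z)\in\mathbb{R}^{CT\times T}$ stacks $\mathsf{circ}(\bar z[1]),\dots,\mathsf{circ}(\bar z[C])$ vertically, and $\mathsf{circ}(\bar Z)=[\mathsf{circ}(\bar z^1),\dots,\mathsf{circ}(\bar z^m)]\in\mathbb{R}^{CT\times Tm}$. DFT convention (applied along the time dimension, channel by channel and signal by signal): with $\omega=e^{-2\pi\sqrt{-1}/T}$, $\mathrm{DFT}(v)(p)=\sum_{t=0}^{T-1}v(t)\omega^{pt}$ and $\mathrm{IDFT}$ is its inverse, $\mathrm{IDFT}(u)(t)=\frac1T\sum_{p=0}^{T-1}u(p)\omega^{-pt}$. $\mathrm{DFT}(\bar Z)(p)\in\mathbb{C}^{C\times m}$ has $(c,i)$ entry $\mathrm{DFT}(\bar z^i[c])(p)$; for an array $\bar U\in\mathbb{C}^{C\times T\times m}$, $\bar U(p)$ is its $C\times m$ slice at frequency $p$. $^*$ is conjugate transpose; $\otimes$ is the Kronecker product. *)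

theory Defs
  imports "HOL-Analysis.Analysis" "Jordan_Normal_Form.Schur_Decomposition"
    "Jordan_Normal_Form.Gauss_Jordan_Elimination" "Jordan_Normal_Form.Determinant"
begin

text \<open>A multi-channel signal collection Z in R^{C x T x m} is represented as a function
  Z c t i (channel c < C, time t < T, signal i < m); values outside these bounds are irrelevant.\<close>

type_synonym sigarr = "nat \<Rightarrow> nat \<Rightarrow> nat \<Rightarrow> real"
type_synonym csigarr = "nat \<Rightarrow> nat \<Rightarrow> nat \<Rightarrow> complex"

text \<open>circ(Z) in R^{CT x Tm}: row c*T + a, column i*T + b, entry z^i[c]((a-b) mod T).\<close>
definition circZ :: "nat \<Rightarrow> nat \<Rightarrow> nat \<Rightarrow> sigarr \<Rightarrow> real mat" where
  "circZ C T m Z = mat (C * T) (T * m)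
     (\<lambda>(r, s). Z (r div T) (nat ((int (r mod T) - int (s mod T)) mod int T)) (s div T))"

text \<open>Kronecker product Pi \<otimes> I_T, of size Tm x Tm, with index i*T + b.\<close>
definition kron_id :: "nat \<Rightarrow> real mat \<Rightarrow> real mat" where
  "kron_id T P = mat (dim_row P * T) (dim_col P * T)
     (\<lambda>(r, s). if r mod T = s mod T then P $$ (r div T, s div T) else 0)"

definition omega :: "nat \<Rightarrow> complex" where
  "omega T = cis (- 2 * pi / real T)"

definition DFTZ :: "nat \<Rightarrow> nat \<Rightarrow> nat \<Rightarrow> sigarr \<Rightarrow> nat \<Rightarrow> complex mat" where
  "DFTZ C T m Z p = mat C m (\<lambda>(c, i). \<Sum>t<T. complex_of_real (Z c t i) * omega T ^ (p * t))"

definition IDFT :: "nat \<Rightarrow> (nat \<Rightarrow> complex mat) \<Rightarrow> csigarr" where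
  "IDFT T U c t i = (1 / of_nat T) * (\<Sum>p<T. (U p) $$ (c, i) * inverse (omega T ^ (p * t)))"

definition perturb :: "sigarr \<Rightarrow> nat \<Rightarrow> nat \<Rightarrow> nat \<Rightarrow> real \<Rightarrow> sigarr" where
  "perturb Z c0 t0 i0 s = (\<lambda>c t i. Z c t i + (if c = c0 \<and> t = t0 \<and> i = i0 then s else 0))"

definition mat_inv :: "'a :: field mat \<Rightarrow> 'a mat" where
  "mat_inv A = the (mat_inverse A)"

end

theory Submission
  imports Defs
begin


definition ee :: "nat \<Rightarrow> int \<Rightarrow> complex" where
  "ee T k = cis (2 * pi * real_of_int k / real T)"

lemma ee_add: "ee T x * ee T y = ee T (x + y)"
  unfolding ee_def by (simp add: cis_mult add_divide_distrib algebra_simps)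

lemma ee_0[simp]: "ee T 0 = 1" unfolding ee_def by simp

lemma ee_dvd: assumes "T > 0" "int T dvd k" shows "ee T k = 1"
proof -
  obtain j where k: "k = int T * j" using assms by (auto elim: dvdE)
  have "2 * pi * real_of_int k / real T = 2 * pi * real_of_int j" using assms(1) k by simp
  thus ?thesis unfolding ee_def by (simp add: cis_multiple_2pi)
qed

lemma ee_mod: assumes "T > 0" shows "ee T (k mod int T) = ee T k"
proof -
  have "ee T k = ee T (k mod int T) * ee T (int T * (k div int T))"
    by (simp add: ee_add)
  also have "\<dots> = ee T (k mod int T)" using assms by (simp add: ee_dvd)
  finally show ?thesis by simp
qed

lemma ee_eq_1: assumes "T > 0" "ee T k = 1" shows "int T dvd k"
proof -
  have "exp (\<i> * complex_of_real (2 * pi * real_of_int k / real T)) = 1"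
    using assms(2) unfolding ee_def cis_conv_exp by simp
  then obtain n :: int where "2 * pi * real_of_int k / real T = of_int (2*n) * pi"
    by (auto simp: exp_eq_1)
  hence "real_of_int k = real T * of_int n" using assms(1) by (simp add: field_simps)
  hence "k = int T * n" by (metis of_int_eq_iff of_int_mult of_int_of_nat_eq)
  thus ?thesis by simp
qed

lemma ee_pow: "ee T k ^ n = ee T (k * int n)"
  unfolding ee_def Complex.DeMoivre by (simp add: algebra_simps)

lemma ee_sum: assumes "T > 0"
  shows "(\<Sum>b<T. ee T (k * int b)) = (if int T dvd k then of_nat T else 0)"
proof (cases "int T dvd k")
  case True
  have "ee T (k * int b) = 1" for b using True assms by (intro ee_dvd) auto
  thus ?thesis using True by simp
next
  case False
  hence ne: "ee T k \<noteq> 1" using ee_eq_1 assms by blast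
  have "(\<Sum>b<T. ee T (k * int b)) = (\<Sum>b<T. ee T k ^ b)" by (simp add: ee_pow)
  also have "\<dots> = (1 - ee T k ^ T) / (1 - ee T k)" using ne by (simp add: sum_gp_strict)
  also have "ee T k ^ T = 1" using assms by (simp add: ee_pow ee_dvd)
  finally show ?thesis using False by simp
qed

lemma omega_pow: "omega T ^ n = ee T (- int n)"
  unfolding omega_def ee_def Complex.DeMoivre by (simp add: algebra_simps)

lemma inv_omega_pow: "inverse (omega T ^ n) = ee T (int n)"
  unfolding omega_pow ee_def by simp

lemma cnj_ee: "cnj (ee T k) = ee T (- k)"
  unfolding ee_def by (simp add: cis_cnj)

lemma sum_split: fixes n T :: nat shows "(\<Sum>u<n*T. f u) = (\<Sum>i<n. \<Sum>b<T. f (i*T+b))"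
proof (induct n arbitrary: f)
  case (Suc n)
  have "(\<Sum>u<Suc n*T. f u) = (\<Sum>u<n*T. f u) + (\<Sum>u\<in>{n*T..<n*T+T}. f u)"
    by (simp add: sum.atLeastLessThan_concat[symmetric] lessThan_atLeast0 add.commute)
  also have "(\<Sum>u\<in>{n*T..<n*T+T}. f u) = (\<Sum>b<T. f (n*T+b))"
    by (simp add: sum.shift_bounds_nat_ivl[where k="n*T" and m=0, simplified] lessThan_atLeast0 add.commute)
  finally show ?case using Suc by simp
qed simp



definition Phi :: "nat \<Rightarrow> nat \<Rightarrow> nat \<Rightarrow> (nat \<Rightarrow> complex mat) \<Rightarrow> complex mat" where
  "Phi T n1 n2 X = mat (n1*T) (n2*T) (\<lambda>(r,s). (1 / of_nat T) *
     (\<Sum>p<T. X p $$ (r div T, s div T) * ee T (int p * (int (r mod T) - int (s mod T)))))"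

lemma Phi_carrier[simp]: "Phi T n1 n2 X \<in> carrier_mat (n1*T) (n2*T)"
  unfolding Phi_def by simp

lemma Phi_dim[simp]: "dim_row (Phi T n1 n2 X) = n1*T" "dim_col (Phi T n1 n2 X) = n2*T"
  unfolding Phi_def by simp_all

lemma Phi_index: "r < n1*T \<Longrightarrow> s < n2*T \<Longrightarrow> Phi T n1 n2 X $$ (r,s) = (1 / of_nat T) *
     (\<Sum>p<T. X p $$ (r div T, s div T) * ee T (int p * (int (r mod T) - int (s mod T))))"
  unfolding Phi_def by simp

lemma Phi_index': assumes "T > 0" "i < n2" "b < T" "r < n1 * T"
  shows "Phi T n1 n2 X $$ (r, i*T+b) = (1 / of_nat T) *
     (\<Sum>p<T. X p $$ (r div T, i) * ee T (int p * (int (r mod T) - int b)))"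
proof -
  have "i*T+b < (i+1)*T" using assms by simp
  also have "\<dots> \<le> n2*T" using assms by (intro mult_le_mono1) simp
  finally have "i*T+b < n2*T" .
  thus ?thesis using assms by (simp add: Phi_index)
qed

lemma Phi_index'': assumes "T > 0" "i < n1" "b < T" "s < n2 * T"
  shows "Phi T n1 n2 X $$ (i*T+b, s) = (1 / of_nat T) *
     (\<Sum>p<T. X p $$ (i, s div T) * ee T (int p * (int b - int (s mod T))))"
proof -
  have "i*T+b < (i+1)*T" using assms by simp
  also have "\<dots> \<le> n1*T" using assms by (intro mult_le_mono1) simp
  finally have "i*T+b < n1*T" .
  thus ?thesis using assms by (simp add: Phi_index)
qed

lemma ee_orth: assumes "T > 0" "p < T" "q < T"
  shows "(\<Sum>b<T. ee T ((int q - int p) * int b)) = (if p = q then of_nat T else 0)"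
proof -
  have "int T dvd (int q - int p) \<longleftrightarrow> p = q"
  proof
    assume "int T dvd (int q - int p)"
    hence "int q mod int T = int p mod int T" by (simp add: mod_eq_dvd_iff)
    thus "p = q" using assms by simp
  qed simp
  thus ?thesis using ee_sum[OF assms(1)] by simp
qed

lemma mult_index_sum: "A \<in> carrier_mat n k \<Longrightarrow> B \<in> carrier_mat k l \<Longrightarrow> i < n \<Longrightarrow> j < l \<Longrightarrow>
  (A * B) $$ (i,j) = (\<Sum>u<k. A $$ (i,u) * B $$ (u,j))"
  by (simp add: scalar_prod_def atLeast0LessThan)

lemma rearr: assumes "e1*e2 = e3*e4"
  shows "(c::complex)*c*((x*e1)*(y*e2)) = c*c*(x*y*e3)*e4"
proof -
  have "c*c*((x*e1)*(y*e2)) = c*c*(x*y*(e1*e2))" by (simp add: mult_ac)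
  also have "\<dots> = c*c*(x*y*(e3*e4))" using assms by simp
  also have "\<dots> = c*c*(x*y*e3)*e4" by (simp add: mult_ac)
  finally show ?thesis .
qed

lemma swap3: fixes f :: "nat \<Rightarrow> nat \<Rightarrow> complex" shows "(\<Sum>b\<in>B. \<Sum>p\<in>P. \<Sum>q\<in>Q. f p q * g p q b) = (\<Sum>p\<in>P. \<Sum>q\<in>Q. f p q * (\<Sum>b\<in>B. g p q b))"
proof -
  have "(\<Sum>p\<in>P. \<Sum>q\<in>Q. f p q * (\<Sum>b\<in>B. g p q b)) = (\<Sum>p\<in>P. \<Sum>q\<in>Q. \<Sum>b\<in>B. f p q * g p q b)"
    by (simp add: sum_distrib_left)
  also have "\<dots> = (\<Sum>p\<in>P. \<Sum>b\<in>B. \<Sum>q\<in>Q. f p q * g p q b)" by (intro sum.cong refl sum.swap)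
  also have "\<dots> = (\<Sum>b\<in>B. \<Sum>p\<in>P. \<Sum>q\<in>Q. f p q * g p q b)" by (rule sum.swap)
  finally show ?thesis by simp
qed

lemma Phi_mult:
  assumes T: "T > 0" and X: "\<And>p. p < T \<Longrightarrow> X p \<in> carrier_mat n1 n2"
    and Y: "\<And>p. p < T \<Longrightarrow> Y p \<in> carrier_mat n2 n3"
  shows "Phi T n1 n2 X * Phi T n2 n3 Y = Phi T n1 n3 (\<lambda>p. X p * Y p)"
proof (rule eq_matI)
  fix r s assume r: "r < dim_row (Phi T n1 n3 (\<lambda>p. X p * Y p))" and s: "s < dim_col (Phi T n1 n3 (\<lambda>p. X p * Y p))"
  hence r: "r < n1*T" and s: "s < n3*T" by auto
  have rT: "r div T < n1" and sT: "s div T < n3" using r s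
    by (simp_all add: less_mult_imp_div_less)
  define a where "a = int (r mod T)"
  define d where "d = int (s mod T)"
  define c where "c = 1 / (of_nat T :: complex)"
  have "(Phi T n1 n2 X * Phi T n2 n3 Y) $$ (r,s) = (\<Sum>u<n2*T. Phi T n1 n2 X $$ (r,u) * Phi T n2 n3 Y $$ (u,s))"
    using r s by (intro mult_index_sum) auto
  also have "\<dots> = (\<Sum>i<n2. \<Sum>b<T. Phi T n1 n2 X $$ (r,i*T+b) * Phi T n2 n3 Y $$ (i*T+b,s))"
    by (rule sum_split)
  also have "\<dots> = (\<Sum>i<n2. \<Sum>b<T. (c * (\<Sum>p<T. X p $$ (r div T, i) * ee T (int p * (a - int b)))) *
         (c * (\<Sum>q<T. Y q $$ (i, s div T) * ee T (int q * (int b - d)))))"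
    using T r s by (intro sum.cong refl) (simp add: Phi_index' Phi_index'' a_def d_def c_def)
  also have "\<dots> = (\<Sum>i<n2. \<Sum>b<T. \<Sum>p<T. \<Sum>q<T. c * c * (X p $$ (r div T, i) * Y q $$ (i, s div T) *
         ee T (int p * a - int q * d)) * ee T ((int q - int p) * int b))"
  proof (intro sum.cong refl)
    fix i b
    have e1: "ee T (int p*(a - int b)) * ee T (int q*(int b - d)) = ee T (int p*a - int q*d) * ee T ((int q - int p)*int b)" for p q
      by (simp add: ee_add algebra_simps)
    show "(c * (\<Sum>p<T. X p $$ (r div T, i) * ee T (int p * (a - int b)))) *
         (c * (\<Sum>q<T. Y q $$ (i, s div T) * ee T (int q * (int b - d)))) =
         (\<Sum>p<T. \<Sum>q<T. c * c * (X p $$ (r div T, i) * Y q $$ (i, s div T) *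
         ee T (int p * a - int q * d)) * ee T ((int q - int p) * int b))"
    proof -
      have "(c * (\<Sum>p<T. X p $$ (r div T, i) * ee T (int p * (a - int b)))) *
         (c * (\<Sum>q<T. Y q $$ (i, s div T) * ee T (int q * (int b - d)))) = c * c * ((\<Sum>p<T. X p $$ (r div T, i) * ee T (int p * (a - int b))) *
         (\<Sum>q<T. Y q $$ (i, s div T) * ee T (int q * (int b - d))))" by (simp only: mult_ac)
      also have "\<dots> = c * c * (\<Sum>p<T. \<Sum>q<T. (X p $$ (r div T, i) * ee T (int p * (a - int b))) *
         (Y q $$ (i, s div T) * ee T (int q * (int b - d))))" by (simp only: sum_product)
      also have "\<dots> = (\<Sum>p<T. \<Sum>q<T. c * c * ((X p $$ (r div T, i) * ee T (int p * (a - int b))) *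
         (Y q $$ (i, s div T) * ee T (int q * (int b - d)))))" by (simp only: sum_distrib_left)
      also have "\<dots> = (\<Sum>p<T. \<Sum>q<T. c * c * (X p $$ (r div T, i) * Y q $$ (i, s div T) *
         ee T (int p * a - int q * d)) * ee T ((int q - int p) * int b))"
        by (intro sum.cong refl rearr e1)
      finally show ?thesis .
    qed
  qed
  also have "\<dots> = (\<Sum>i<n2. \<Sum>p<T. \<Sum>q<T. c * c * (X p $$ (r div T, i) * Y q $$ (i, s div T) *
         ee T (int p * a - int q * d)) * (\<Sum>b<T. ee T ((int q - int p) * int b)))"
  proof (rule sum.cong[OF refl])
    fix i
    show "(\<Sum>b<T. \<Sum>p<T. \<Sum>q<T. c * c * (X p $$ (r div T, i) * Y q $$ (i, s div T) *
         ee T (int p * a - int q * d)) * ee T ((int q - int p) * int b)) =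
      (\<Sum>p<T. \<Sum>q<T. c * c * (X p $$ (r div T, i) * Y q $$ (i, s div T) *
         ee T (int p * a - int q * d)) * (\<Sum>b<T. ee T ((int q - int p) * int b)))"
      by (rule swap3)
  qed
  also have "\<dots> = (\<Sum>i<n2. \<Sum>p<T. c * c * (X p $$ (r div T, i) * Y p $$ (i, s div T) *
         ee T (int p * a - int p * d)) * of_nat T)"
  proof (intro sum.cong refl)
    fix i p assume p: "p \<in> {..<T}"
    have "(\<Sum>q<T. c * c * (X p $$ (r div T, i) * Y q $$ (i, s div T) *
         ee T (int p * a - int q * d)) * (\<Sum>b<T. ee T ((int q - int p) * int b))) =
         (\<Sum>q<T. if q = p then c * c * (X p $$ (r div T, i) * Y q $$ (i, s div T) *
         ee T (int p * a - int q * d)) * of_nat T else 0)"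
      using T p by (intro sum.cong refl) (auto simp: ee_orth)
    also have "\<dots> = c * c * (X p $$ (r div T, i) * Y p $$ (i, s div T) *
         ee T (int p * a - int p * d)) * of_nat T"
      using p by (simp add: sum.delta)
    finally show "(\<Sum>q<T. c * c * (X p $$ (r div T, i) * Y q $$ (i, s div T) *
         ee T (int p * a - int q * d)) * (\<Sum>b<T. ee T ((int q - int p) * int b))) =
         c * c * (X p $$ (r div T, i) * Y p $$ (i, s div T) *
         ee T (int p * a - int p * d)) * of_nat T" .
  qed
  also have "\<dots> = c * (\<Sum>p<T. (\<Sum>i<n2. X p $$ (r div T, i) * Y p $$ (i, s div T)) * ee T (int p * (a - d)))"
  proof -
    have cc: "c * c * of_nat T = c" using T by (simp add: c_def)
    have "(\<Sum>i<n2. \<Sum>p<T. c * c * (X p $$ (r div T, i) * Y p $$ (i, s div T) *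
         ee T (int p * a - int p * d)) * of_nat T) = (\<Sum>i<n2. \<Sum>p<T. c * (X p $$ (r div T, i) * Y p $$ (i, s div T) *
         ee T (int p * (a - d))))"
    proof (intro sum.cong refl)
      fix i p
      have "c * c * (X p $$ (r div T, i) * Y p $$ (i, s div T) * ee T (int p * a - int p * d)) * of_nat T
         = (c * c * of_nat T) * (X p $$ (r div T, i) * Y p $$ (i, s div T) * ee T (int p * a - int p * d))"
        by (simp only: mult_ac)
      also have "\<dots> = c * (X p $$ (r div T, i) * Y p $$ (i, s div T) * ee T (int p * (a - d)))"
        by (simp only: cc right_diff_distrib)
      finally show "c * c * (X p $$ (r div T, i) * Y p $$ (i, s div T) * ee T (int p * a - int p * d)) * of_nat T
         = c * (X p $$ (r div T, i) * Y p $$ (i, s div T) * ee T (int p * (a - d)))" .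
    qed
    also have "\<dots> = c * (\<Sum>p<T. \<Sum>i<n2. X p $$ (r div T, i) * Y p $$ (i, s div T) * ee T (int p * (a - d)))"
      by (subst sum.swap) (simp add: sum_distrib_left mult_ac)
    finally show ?thesis by (simp add: sum_distrib_right)
  qed
  also have "\<dots> = Phi T n1 n3 (\<lambda>p. X p * Y p) $$ (r,s)"
  proof -
    have "Phi T n1 n3 (\<lambda>p. X p * Y p) $$ (r,s) = c * (\<Sum>p<T. (X p * Y p) $$ (r div T, s div T) * ee T (int p * (a - d)))"
      using r s unfolding Phi_index[OF r s] c_def a_def d_def by simp
    also have "\<dots> = c * (\<Sum>p<T. (\<Sum>i<n2. X p $$ (r div T, i) * Y p $$ (i, s div T)) * ee T (int p * (a - d)))"
    proof -
      have "(X p * Y p) $$ (r div T, s div T) = (\<Sum>i<n2. X p $$ (r div T, i) * Y p $$ (i, s div T))" if "p < T" for p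
        using X[OF that] Y[OF that] rT sT by (intro mult_index_sum) auto
      thus ?thesis by (intro arg_cong[where f="\<lambda>x. c * x"] sum.cong refl) auto
    qed
    finally show ?thesis by simp
  qed
  finally show "(Phi T n1 n2 X * Phi T n2 n3 Y) $$ (r,s) = Phi T n1 n3 (\<lambda>p. X p * Y p) $$ (r,s)" .
qed auto



lemma mat_adjoint_alt: "mat_adjoint (A :: complex mat) = mat (dim_col A) (dim_row A) (\<lambda>(i,j). cnj (A $$ (j,i)))"
  by (rule eq_matI) (auto simp: mat_adjoint_def mat_of_rows_def)

lemma Phi_add: assumes "\<And>p. p < T \<Longrightarrow> X p \<in> carrier_mat n1 n2" "\<And>p. p < T \<Longrightarrow> Y p \<in> carrier_mat n1 n2"
  shows "Phi T n1 n2 (\<lambda>p. X p + Y p) = Phi T n1 n2 X + Phi T n1 n2 Y"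
proof (rule eq_matI)
  fix r s assume "r < dim_row (Phi T n1 n2 X + Phi T n1 n2 Y)" "s < dim_col (Phi T n1 n2 X + Phi T n1 n2 Y)"
  hence r: "r < n1*T" and s: "s < n2*T" by auto
  have rT: "r div T < n1" and sT: "s div T < n2" using r s by (simp_all add: less_mult_imp_div_less)
  have "(X p + Y p) $$ (r div T, s div T) = X p $$ (r div T, s div T) + Y p $$ (r div T, s div T)" if "p < T" for p
    using assms[OF that] rT sT by simp
  thus "Phi T n1 n2 (\<lambda>p. X p + Y p) $$ (r, s) = (Phi T n1 n2 X + Phi T n1 n2 Y) $$ (r, s)"
    using r s by (simp add: Phi_index sum.distrib distrib_left distrib_right)
qed auto

lemma Phi_smult: assumes "\<And>p. p < T \<Longrightarrow> X p \<in> carrier_mat n1 n2"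
  shows "Phi T n1 n2 (\<lambda>p. k \<cdot>\<^sub>m X p) = k \<cdot>\<^sub>m Phi T n1 n2 X"
proof (rule eq_matI)
  fix r s assume "r < dim_row (k \<cdot>\<^sub>m Phi T n1 n2 X)" "s < dim_col (k \<cdot>\<^sub>m Phi T n1 n2 X)"
  hence r: "r < n1*T" and s: "s < n2*T" by auto
  have rT: "r div T < n1" and sT: "s div T < n2" using r s by (simp_all add: less_mult_imp_div_less)
  have "(k \<cdot>\<^sub>m X p) $$ (r div T, s div T) = k * X p $$ (r div T, s div T)" if "p < T" for p
    using assms[OF that] rT sT by simp
  thus "Phi T n1 n2 (\<lambda>p. k \<cdot>\<^sub>m X p) $$ (r, s) = (k \<cdot>\<^sub>m Phi T n1 n2 X) $$ (r, s)"
    using r s by (simp add: Phi_index sum_distrib_left mult_ac)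
qed auto

lemma Phi_const: assumes T: "T > 0" and P: "P \<in> carrier_mat n1 n2"
  shows "Phi T n1 n2 (\<lambda>p. P) = mat (n1*T) (n2*T) (\<lambda>(r,s). if r mod T = s mod T then P $$ (r div T, s div T) else 0)"
proof (rule eq_matI)
  fix r s assume "r < dim_row (mat (n1*T) (n2*T) (\<lambda>(r,s). if r mod T = s mod T then P $$ (r div T, s div T) else 0))"
    "s < dim_col (mat (n1*T) (n2*T) (\<lambda>(r,s). if r mod T = s mod T then P $$ (r div T, s div T) else 0))"
  hence r: "r < n1*T" and s: "s < n2*T" by auto
  have "(\<Sum>p<T. P $$ (r div T, s div T) * ee T (int p * (int (r mod T) - int (s mod T))))
     = P $$ (r div T, s div T) * (\<Sum>p<T. ee T ((int (r mod T) - int (s mod T)) * int p))"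
    by (simp add: sum_distrib_left mult_ac)
  also have "\<dots> = P $$ (r div T, s div T) * (if r mod T = s mod T then of_nat T else 0)"
    using ee_orth[OF T, of "s mod T" "r mod T"] T by simp
  finally show "Phi T n1 n2 (\<lambda>p. P) $$ (r, s) = mat (n1*T) (n2*T) (\<lambda>(r,s). if r mod T = s mod T then P $$ (r div T, s div T) else 0) $$ (r, s)"
    using r s T by (simp add: Phi_index)
qed auto

lemma Phi_one: assumes T: "T > 0" shows "Phi T n n (\<lambda>p. 1\<^sub>m n) = 1\<^sub>m (n*T)"
proof -
  have "mat (n*T) (n*T) (\<lambda>(r,s). if r mod T = s mod T then (1\<^sub>m n :: complex mat) $$ (r div T, s div T) else 0) = 1\<^sub>m (n*T)"
  proof (rule eq_matI)
    fix r s assume "r < dim_row (1\<^sub>m (n * T) :: complex mat)" "s < dim_col (1\<^sub>m (n * T) :: complex mat)"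
    hence r: "r < n*T" and s: "s < n*T" by auto
    have rT: "r div T < n" and sT: "s div T < n" using r s by (simp_all add: less_mult_imp_div_less)
    have "(r mod T = s mod T \<and> r div T = s div T) \<longleftrightarrow> r = s"
      by (metis div_mult_mod_eq)
    thus "mat (n*T) (n*T) (\<lambda>(r,s). if r mod T = s mod T then (1\<^sub>m n :: complex mat) $$ (r div T, s div T) else 0) $$ (r, s) = 1\<^sub>m (n*T) $$ (r, s)"
      using r s rT sT by auto
  qed auto
  thus ?thesis using Phi_const[OF T, of "1\<^sub>m n" n n] by simp
qed

lemma kron_Phi: assumes T: "T > 0" and P: "P \<in> carrier_mat m m"
  shows "map_mat complex_of_real (kron_id T P) = Phi T m m (\<lambda>p. map_mat complex_of_real P)"
  using P by (subst Phi_const[OF T]) (auto simp: kron_id_def less_mult_imp_div_less intro!: eq_matI)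

lemma dft_inv: assumes T: "T > 0" and a: "a < T" and b: "b < T"
  shows "(1 / of_nat T) * (\<Sum>p<T. (\<Sum>t<T. complex_of_real (z t) * ee T (- (int p * int t))) * ee T (int p * (int a - int b)))
    = complex_of_real (z (nat ((int a - int b) mod int T)))"
proof -
  define t0 where "t0 = nat ((int a - int b) mod int T)"
  have "(int a - int b) mod int T < int T" using T by simp
  hence t0: "t0 < T" unfolding t0_def using T by (simp add: nat_less_iff)
  have dv: "int T dvd (int a - int b - int t) \<longleftrightarrow> t = t0" if "t < T" for t
  proof -
    have "int T dvd (int a - int b - int t) \<longleftrightarrow> (int a - int b) mod int T = int t mod int T"
      by (simp add: mod_eq_dvd_iff)
    also have "int t mod int T = int t" using that by simp
    also have "(int a - int b) mod int T = int t \<longleftrightarrow> t = t0" unfolding t0_def using T by auto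
    finally show ?thesis .
  qed
  have "(\<Sum>p<T. (\<Sum>t<T. complex_of_real (z t) * ee T (- (int p * int t))) * ee T (int p * (int a - int b)))
     = (\<Sum>p<T. \<Sum>t<T. complex_of_real (z t) * ee T ((int a - int b - int t) * int p))"
  proof -
    have e: "ee T (-(int p*int t)) * ee T (int p*(int a - int b)) = ee T ((int a - int b - int t)*int p)" for p t
      by (simp add: ee_add algebra_simps)
    show ?thesis by (simp only: sum_distrib_right mult.assoc e)
  qed
  also have "\<dots> = (\<Sum>t<T. complex_of_real (z t) * (\<Sum>p<T. ee T ((int a - int b - int t) * int p)))"
    by (subst sum.swap) (simp add: sum_distrib_left)
  also have "\<dots> = (\<Sum>t<T. if t = t0 then complex_of_real (z t) * of_nat T else 0)"
    by (intro sum.cong refl) (simp add: ee_sum[OF T] dv)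
  also have "\<dots> = complex_of_real (z t0) * of_nat T" using t0 by (simp add: sum.delta)
  finally show ?thesis using T by (simp add: t0_def)
qed

lemma DFTZ_index: "c < C \<Longrightarrow> i < m \<Longrightarrow> DFTZ C T m Z p $$ (c,i) = (\<Sum>t<T. complex_of_real (Z c t i) * ee T (- (int p * int t)))"
  unfolding DFTZ_def by (simp add: omega_pow)

lemma DFTZ_carrier[simp]: "DFTZ C T m Z p \<in> carrier_mat C m"
  unfolding DFTZ_def by simp

lemma DFTZ_dim[simp]: "dim_row (DFTZ C T m Z p) = C" "dim_col (DFTZ C T m Z p) = m"
  unfolding DFTZ_def by simp_all

lemma circ_Phi: assumes T: "T > 0"
  shows "map_mat complex_of_real (circZ C T m Z) = Phi T C m (DFTZ C T m Z)"
proof (rule eq_matI)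
  fix r s assume "r < dim_row (Phi T C m (DFTZ C T m Z))" "s < dim_col (Phi T C m (DFTZ C T m Z))"
  hence r: "r < C*T" and s: "s < m*T" by auto
  have rT: "r div T < C" and sT: "s div T < m" using r s by (simp_all add: less_mult_imp_div_less)
  have s': "s < T * m" using s by (simp add: mult.commute)
  have "Phi T C m (DFTZ C T m Z) $$ (r, s) = (1 / of_nat T) * (\<Sum>p<T. (\<Sum>t<T. complex_of_real (Z (r div T) t (s div T)) * ee T (- (int p * int t))) * ee T (int p * (int (r mod T) - int (s mod T))))"
    using r s rT sT by (simp add: Phi_index DFTZ_index)
  also have "\<dots> = complex_of_real (Z (r div T) (nat ((int (r mod T) - int (s mod T)) mod int T)) (s div T))"
    using T by (intro dft_inv) auto
  finally show "map_mat complex_of_real (circZ C T m Z) $$ (r, s) = Phi T C m (DFTZ C T m Z) $$ (r, s)"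
    using r s' by (simp add: circZ_def)
qed (auto simp: circZ_def)

lemma circT_Phi: assumes T: "T > 0"
  shows "map_mat complex_of_real (transpose_mat (circZ C T m Z)) = Phi T m C (\<lambda>p. mat_adjoint (DFTZ C T m Z p))"
proof (rule eq_matI)
  fix s r assume "s < dim_row (Phi T m C (\<lambda>p. mat_adjoint (DFTZ C T m Z p)))" "r < dim_col (Phi T m C (\<lambda>p. mat_adjoint (DFTZ C T m Z p)))"
  hence r: "r < C*T" and s: "s < m*T" by auto
  have rT: "r div T < C" and sT: "s div T < m" using r s by (simp_all add: less_mult_imp_div_less)
  have s': "s < T * m" using s by (simp add: mult.commute)
  have "Phi T m C (\<lambda>p. mat_adjoint (DFTZ C T m Z p)) $$ (s, r)
     = (1 / of_nat T) * (\<Sum>p<T. cnj (DFTZ C T m Z p $$ (r div T, s div T)) * ee T (int p * (int (s mod T) - int (r mod T))))"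
    using r s rT sT by (simp add: Phi_index mat_adjoint_alt)
  also have "\<dots> = cnj ((1 / of_nat T) * (\<Sum>p<T. DFTZ C T m Z p $$ (r div T, s div T) * ee T (int p * (int (r mod T) - int (s mod T)))))"
    by (simp add: cnj_ee algebra_simps)
  also have "\<dots> = cnj (complex_of_real (Z (r div T) (nat ((int (r mod T) - int (s mod T)) mod int T)) (s div T)))"
  proof (rule arg_cong[where f=cnj])
    have "(1 / of_nat T) * (\<Sum>p<T. DFTZ C T m Z p $$ (r div T, s div T) * ee T (int p * (int (r mod T) - int (s mod T))))
      = (1 / of_nat T) * (\<Sum>p<T. (\<Sum>t<T. complex_of_real (Z (r div T) t (s div T)) * ee T (- (int p * int t))) * ee T (int p * (int (r mod T) - int (s mod T))))"
      using rT sT by (simp add: DFTZ_index)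
    also have "\<dots> = complex_of_real (Z (r div T) (nat ((int (r mod T) - int (s mod T)) mod int T)) (s div T))"
      using T by (intro dft_inv) auto
    finally show "(1 / of_nat T) * (\<Sum>p<T. DFTZ C T m Z p $$ (r div T, s div T) * ee T (int p * (int (r mod T) - int (s mod T))))
      = complex_of_real (Z (r div T) (nat ((int (r mod T) - int (s mod T)) mod int T)) (s div T))" .
  qed
  finally show "map_mat complex_of_real (transpose_mat (circZ C T m Z)) $$ (s, r) = Phi T m C (\<lambda>p. mat_adjoint (DFTZ C T m Z p)) $$ (s, r)"
    using r s' by (simp add: circZ_def)
qed (auto simp: circZ_def)



lemma mat_adjoint_carrier[simp]: "mat_adjoint (A :: complex mat) \<in> carrier_mat (dim_col A) (dim_row A)"
  by (simp add: mat_adjoint_alt)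

lemma mat_adjoint_index: "i < dim_col A \<Longrightarrow> j < dim_row A \<Longrightarrow> mat_adjoint (A :: complex mat) $$ (i,j) = cnj (A $$ (j,i))"
  by (simp add: mat_adjoint_alt)

lemma mult_vec_index_sum: "A \<in> carrier_mat n k \<Longrightarrow> v \<in> carrier_vec k \<Longrightarrow> i < n \<Longrightarrow>
  (A *\<^sub>v v) $ i = (\<Sum>u<k. A $$ (i,u) * v $ u)"
  by (simp add: scalar_prod_def atLeast0LessThan)

lemma diag_mult_index: assumes P: "P \<in> carrier_mat q q" "diagonal_mat P" and F: "F \<in> carrier_mat n q"
  and c: "c < n" and j: "j < q"
  shows "(F * map_mat complex_of_real P) $$ (c,j) = F $$ (c,j) * complex_of_real (P $$ (j,j))"
proof -
  have "(F * map_mat complex_of_real P) $$ (c,j) = (\<Sum>l<q. F $$ (c,l) * map_mat complex_of_real P $$ (l,j))"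
    using P F c j by (intro mult_index_sum) auto
  also have "\<dots> = (\<Sum>l<q. if l = j then F $$ (c,j) * complex_of_real (P $$ (j,j)) else 0)"
    using P j unfolding diagonal_mat_def by (intro sum.cong refl) auto
  also have "\<dots> = F $$ (c,j) * complex_of_real (P $$ (j,j))" using j by (simp add: sum.delta)
  finally show ?thesis .
qed

lemma quad_nonneg:
  assumes F: "F \<in> carrier_mat n q" and P: "P \<in> carrier_mat q q" "diagonal_mat P" "\<forall>j<q. P $$ (j,j) \<ge> 0"
    and v: "v \<in> carrier_vec n"
  shows "Re (\<Sum>c<n. cnj (v $ c) * ((F * map_mat complex_of_real P * mat_adjoint F) *\<^sub>v v) $ c) \<ge> 0"
proof -
  define w where "w j = (\<Sum>k<n. cnj (F $$ (k,j)) * v $ k)" for j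
  have FA: "mat_adjoint F \<in> carrier_mat q n" using F by (metis mat_adjoint_carrier carrier_matD)
  have FP: "F * map_mat complex_of_real P \<in> carrier_mat n q" using F P by auto
  have X: "(F * map_mat complex_of_real P * mat_adjoint F) $$ (c,k) = (\<Sum>j<q. F $$ (c,j) * complex_of_real (P $$ (j,j)) * cnj (F $$ (k,j)))"
    if "c < n" "k < n" for c k
  proof -
    have "(F * map_mat complex_of_real P * mat_adjoint F) $$ (c,k) = (\<Sum>j<q. (F * map_mat complex_of_real P) $$ (c,j) * mat_adjoint F $$ (j,k))"
      using FP FA that by (intro mult_index_sum) auto
    also have "\<dots> = (\<Sum>j<q. F $$ (c,j) * complex_of_real (P $$ (j,j)) * cnj (F $$ (k,j)))"
    proof (rule sum.cong[OF refl])
      fix j assume j: "j \<in> {..<q}"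
      have 1: "(F * map_mat complex_of_real P) $$ (c,j) = F $$ (c,j) * complex_of_real (P $$ (j,j))"
        using j that by (intro diag_mult_index[OF P(1,2) F]) auto
      have 2: "mat_adjoint F $$ (j,k) = cnj (F $$ (k,j))"
        using j that F by (intro mat_adjoint_index) auto
      show "(F * map_mat complex_of_real P) $$ (c,j) * mat_adjoint F $$ (j,k) = F $$ (c,j) * complex_of_real (P $$ (j,j)) * cnj (F $$ (k,j))"
        by (simp only: 1 2)
    qed
    finally show ?thesis .
  qed
  have "(\<Sum>c<n. cnj (v $ c) * ((F * map_mat complex_of_real P * mat_adjoint F) *\<^sub>v v) $ c)
     = (\<Sum>c<n. cnj (v $ c) * (\<Sum>k<n. (\<Sum>j<q. F $$ (c,j) * complex_of_real (P $$ (j,j)) * cnj (F $$ (k,j))) * v $ k))"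
  proof (rule sum.cong[OF refl])
    fix c assume c: "c \<in> {..<n}"
    have "((F * map_mat complex_of_real P * mat_adjoint F) *\<^sub>v v) $ c = (\<Sum>k<n. (F * map_mat complex_of_real P * mat_adjoint F) $$ (c,k) * v $ k)"
      using FP FA v c by (intro mult_vec_index_sum) auto
    thus "cnj (v $ c) * ((F * map_mat complex_of_real P * mat_adjoint F) *\<^sub>v v) $ c =
      cnj (v $ c) * (\<Sum>k<n. (\<Sum>j<q. F $$ (c,j) * complex_of_real (P $$ (j,j)) * cnj (F $$ (k,j))) * v $ k)"
      using c X by simp
  qed
  also have "\<dots> = (\<Sum>j<q. complex_of_real (P $$ (j,j)) * (cnj (w j) * w j))"
  proof -
    define t where "t c k j = cnj (v $ c) * F $$ (c,j) * complex_of_real (P $$ (j,j)) * cnj (F $$ (k,j)) * v $ k" for c k j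
    have "(\<Sum>c<n. cnj (v $ c) * (\<Sum>k<n. (\<Sum>j<q. F $$ (c,j) * complex_of_real (P $$ (j,j)) * cnj (F $$ (k,j))) * v $ k))
       = (\<Sum>c<n. \<Sum>k<n. \<Sum>j<q. t c k j)"
      unfolding t_def by (simp add: sum_distrib_left sum_distrib_right mult_ac)
    also have "\<dots> = (\<Sum>c<n. \<Sum>j<q. \<Sum>k<n. t c k j)"
      by (rule sum.cong[OF refl]) (rule sum.swap)
    also have "\<dots> = (\<Sum>j<q. \<Sum>c<n. \<Sum>k<n. t c k j)"
      by (rule sum.swap)
    also have "\<dots> = (\<Sum>j<q. complex_of_real (P $$ (j,j)) * (cnj (w j) * w j))"
    proof (rule sum.cong[OF refl])
      fix j
      have "cnj (w j) * w j = (\<Sum>c<n. F $$ (c,j) * cnj (v $ c)) * (\<Sum>k<n. cnj (F $$ (k,j)) * v $ k)"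
        unfolding w_def by (simp add: cnj_sum)
      also have "\<dots> = (\<Sum>c<n. \<Sum>k<n. (F $$ (c,j) * cnj (v $ c)) * (cnj (F $$ (k,j)) * v $ k))"
        by (rule sum_product)
      finally show "(\<Sum>c<n. \<Sum>k<n. t c k j) = complex_of_real (P $$ (j,j)) * (cnj (w j) * w j)"
        unfolding t_def by (simp add: sum_distrib_left mult_ac)
    qed
    finally show ?thesis .
  qed
  also have "\<dots> = (\<Sum>j<q. complex_of_real (P $$ (j,j) * (cmod (w j))^2))"
    by (intro sum.cong refl) (simp only: of_real_mult complex_norm_square mult.commute)
  finally have eq: "(\<Sum>c<n. cnj (v $ c) * ((F * map_mat complex_of_real P * mat_adjoint F) *\<^sub>v v) $ c) =
      complex_of_real (\<Sum>j<q. P $$ (j,j) * (cmod (w j))^2)" by simp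
  show ?thesis unfolding eq using P(3) by (auto intro!: sum_nonneg)
qed

lemma S_det_ne0:
  assumes F: "F \<in> carrier_mat n q" and P: "P \<in> carrier_mat q q" "diagonal_mat P" "\<forall>j<q. P $$ (j,j) \<ge> 0"
    and a: "a \<ge> 0"
  shows "det (1\<^sub>m n + complex_of_real a \<cdot>\<^sub>m (F * map_mat complex_of_real P * mat_adjoint F)) \<noteq> 0"
proof
  define X where "X = F * map_mat complex_of_real P * mat_adjoint F"
  have XC: "X \<in> carrier_mat n n" unfolding X_def using F P
    by (metis carrier_matD(1) carrier_matD(2) carrier_matI index_mult_mat(2) index_mult_mat(3) mat_adjoint_carrier)
  assume "det (1\<^sub>m n + complex_of_real a \<cdot>\<^sub>m (F * map_mat complex_of_real P * mat_adjoint F)) = 0"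
  then obtain v where v: "v \<in> carrier_vec n" "v \<noteq> 0\<^sub>v n" and Sv: "(1\<^sub>m n + complex_of_real a \<cdot>\<^sub>m X) *\<^sub>v v = 0\<^sub>v n"
    using det_0_iff_vec_prod_zero_field[of "1\<^sub>m n + complex_of_real a \<cdot>\<^sub>m X" n] XC unfolding X_def by auto
  have "(\<Sum>c<n. cnj (v $ c) * ((1\<^sub>m n + complex_of_real a \<cdot>\<^sub>m X) *\<^sub>v v) $ c) = 0"
    using Sv by simp
  moreover have "(\<Sum>c<n. cnj (v $ c) * ((1\<^sub>m n + complex_of_real a \<cdot>\<^sub>m X) *\<^sub>v v) $ c)
     = (\<Sum>c<n. cnj (v $ c) * v $ c) + complex_of_real a * (\<Sum>c<n. cnj (v $ c) * (X *\<^sub>v v) $ c)"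
  proof -
    have "((1\<^sub>m n + complex_of_real a \<cdot>\<^sub>m X) *\<^sub>v v) $ c = v $ c + complex_of_real a * (X *\<^sub>v v) $ c" if "c < n" for c
    proof -
      have "(1\<^sub>m n + complex_of_real a \<cdot>\<^sub>m X) *\<^sub>v v = 1\<^sub>m n *\<^sub>v v + (complex_of_real a \<cdot>\<^sub>m X) *\<^sub>v v"
        using XC v by (intro add_mult_distrib_mat_vec) auto
      thus ?thesis using that XC v by simp
    qed
    thus ?thesis by (simp add: sum.distrib sum_distrib_left distrib_left mult_ac)
  qed
  ultimately have "Re ((\<Sum>c<n. cnj (v $ c) * v $ c) + complex_of_real a * (\<Sum>c<n. cnj (v $ c) * (X *\<^sub>v v) $ c)) = 0"
    by simp
  hence "Re (\<Sum>c<n. cnj (v $ c) * v $ c) + a * Re (\<Sum>c<n. cnj (v $ c) * (X *\<^sub>v v) $ c) = 0"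
    by (simp only: plus_complex.sel times_complex.sel Re_complex_of_real Im_complex_of_real)
  moreover have "Re (\<Sum>c<n. cnj (v $ c) * (X *\<^sub>v v) $ c) \<ge> 0"
    unfolding X_def by (rule quad_nonneg[OF F P v(1)])
  moreover have "Re (\<Sum>c<n. cnj (v $ c) * v $ c) = (\<Sum>c<n. (cmod (v $ c))^2)"
  proof -
    have "(\<Sum>c<n. cnj (v $ c) * v $ c) = complex_of_real (\<Sum>c<n. (cmod (v $ c))^2)"
      unfolding of_real_sum complex_norm_square by (simp add: mult.commute)
    thus ?thesis by (simp only: Re_complex_of_real)
  qed
  ultimately have "(\<Sum>c<n. (cmod (v $ c))^2) \<le> 0" using a
    by (smt (verit, ccfv_SIG) mult_nonneg_nonneg)
  hence "\<forall>c\<in>{..<n}. (cmod (v $ c))^2 = 0"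
  proof -
    have "(\<Sum>c<n. (cmod (v $ c))^2) = 0" using \<open>(\<Sum>c<n. (cmod (v $ c))^2) \<le> 0\<close>
      by (meson antisym sum_nonneg zero_le_power2)
    thus ?thesis by (subst (asm) sum_nonneg_eq_0_iff) auto
  qed
  hence "v = 0\<^sub>v n" using v(1) by (intro eq_vecI) auto
  thus False using v(2) by simp
qed

lemma S_inv:
  assumes "S \<in> carrier_mat n n" "det S \<noteq> (0::complex)"
  shows "S * mat_inv S = 1\<^sub>m n" "mat_inv S \<in> carrier_mat n n"
proof -
  have "S \<in> Units (ring_mat TYPE(complex) n ())" by (rule det_non_zero_imp_unit[OF assms])
  hence "mat_inverse S \<noteq> None" using mat_inverse(1)[OF assms(1), where b="()"] by blast
  then obtain B where B: "mat_inverse S = Some B" by auto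
  from mat_inverse(2)[OF assms(1) B] B show "S * mat_inv S = 1\<^sub>m n" "mat_inv S \<in> carrier_mat n n"
    by (auto simp: mat_inv_def)
qed



lemma det_mat_expand: "det (mat n n g) = (\<Sum>p\<in>{p. p permutes {0..<n}}. signof p * (\<Prod>i\<in>{0..<n}. g (i, p i)))"
proof -
  have "det (mat n n g) = (\<Sum>p\<in>{p. p permutes {0..<n}}. signof p * (\<Prod>i=0..<n. mat n n g $$ (i, p i)))"
    by (rule det_def') simp
  also have "\<dots> = (\<Sum>p\<in>{p. p permutes {0..<n}}. signof p * (\<Prod>i\<in>{0..<n}. g (i, p i)))"
  proof (rule sum.cong[OF refl])
    fix p assume "p \<in> {p. p permutes {0..<n}}"
    hence "p i < n" if "i < n" for i using that by (auto simp: permutes_in_image)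
    thus "signof p * (\<Prod>i=0..<n. mat n n g $$ (i, p i)) = signof p * (\<Prod>i\<in>{0..<n}. g (i, p i))"
      by (auto intro!: prod.cong)
  qed
  finally show ?thesis .
qed

lemma det_deriv:
  fixes f :: "real \<Rightarrow> nat \<Rightarrow> nat \<Rightarrow> real"
  assumes d: "\<And>i j. i < n \<Longrightarrow> j < n \<Longrightarrow> ((\<lambda>s. f s i j) has_real_derivative f' i j) (at x)"
  shows "((\<lambda>s. det (mat n n (\<lambda>(i,j). f s i j))) has_real_derivative
     (\<Sum>k<n. det (mat n n (\<lambda>(i,j). if i = k then f' i j else f x i j)))) (at x)"
proof -
  let ?P = "{p. p permutes {0..<n}}"
  have fin: "finite ?P" by (simp add: finite_permutations)
  have "((\<lambda>s. \<Sum>p\<in>?P. signof p * (\<Prod>i\<in>{0..<n}. f s i (p i))) has_real_derivative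
     (\<Sum>p\<in>?P. signof p * (\<Sum>k\<in>{0..<n}. f' k (p k) * (\<Prod>i\<in>{0..<n}-{k}. f x i (p i))))) (at x)"
  proof (rule DERIV_sum, rule DERIV_cmult, rule has_field_derivative_prod)
    fix p k assume "p \<in> ?P" "k \<in> {0..<n}"
    thus "((\<lambda>s. f s k (p k)) has_real_derivative f' k (p k)) (at x)"
      by (intro d) (auto simp: permutes_in_image)
  qed
  also have "(\<Sum>p\<in>?P. signof p * (\<Sum>k\<in>{0..<n}. f' k (p k) * (\<Prod>i\<in>{0..<n}-{k}. f x i (p i))))
     = (\<Sum>k<n. det (mat n n (\<lambda>(i,j). if i = k then f' i j else f x i j)))"
  proof -
    have "(\<Sum>p\<in>?P. signof p * (\<Sum>k\<in>{0..<n}. f' k (p k) * (\<Prod>i\<in>{0..<n}-{k}. f x i (p i))))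
      = (\<Sum>p\<in>?P. \<Sum>k\<in>{0..<n}. signof p * (\<Prod>i\<in>{0..<n}. (if i = k then f' i (p i) else f x i (p i))))"
    proof (rule sum.cong[OF refl])
      fix p
      have "(\<Prod>i\<in>{0..<n}. (if i = k then f' i (p i) else f x i (p i))) = f' k (p k) * (\<Prod>i\<in>{0..<n}-{k}. f x i (p i))"
        if "k \<in> {0..<n}" for k
      proof -
        have "(\<Prod>i\<in>{0..<n}. (if i = k then f' i (p i) else f x i (p i))) =
          (if k = k then f' k (p k) else f x k (p k)) * (\<Prod>i\<in>{0..<n}-{k}. (if i = k then f' i (p i) else f x i (p i)))"
          using that by (intro prod.remove) auto
        also have "(\<Prod>i\<in>{0..<n}-{k}. (if i = k then f' i (p i) else f x i (p i))) = (\<Prod>i\<in>{0..<n}-{k}. f x i (p i))"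
          by (intro prod.cong) auto
        finally show ?thesis by simp
      qed
      thus "signof p * (\<Sum>k\<in>{0..<n}. f' k (p k) * (\<Prod>i\<in>{0..<n}-{k}. f x i (p i))) =
        (\<Sum>k\<in>{0..<n}. signof p * (\<Prod>i\<in>{0..<n}. (if i = k then f' i (p i) else f x i (p i))))"
        by (simp add: sum_distrib_left)
    qed
    also have "\<dots> = (\<Sum>k\<in>{0..<n}. \<Sum>p\<in>?P. signof p * (\<Prod>i\<in>{0..<n}. (if i = k then f' i (p i) else f x i (p i))))"
      by (rule sum.swap)
    also have "\<dots> = (\<Sum>k<n. det (mat n n (\<lambda>(i,j). if i = k then f' i j else f x i j)))"
      unfolding det_mat_expand by (simp add: atLeast0LessThan)
    finally show ?thesis .
  qed
  finally show ?thesis unfolding det_mat_expand by simp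
qed

lemma det_replace_row: assumes M: "M \<in> carrier_mat n n" and k: "k < n"
  shows "det (mat n n (\<lambda>(i,j). if i = k then N $$ (i,j) else M $$ (i,j))) = (\<Sum>j<n. N $$ (k,j) * cofactor M k j)"
proof -
  let ?B = "mat n n (\<lambda>(i,j). if i = k then N $$ (i,j) else M $$ (i,j))"
  have "det ?B = (\<Sum>j<n. ?B $$ (k,j) * cofactor ?B k j)"
    by (rule laplace_expansion_row[OF _ k]) simp
  also have "\<dots> = (\<Sum>j<n. N $$ (k,j) * cofactor M k j)"
  proof (rule sum.cong[OF refl])
    fix j assume j: "j \<in> {..<n}"
    have "mat_delete ?B k j = mat_delete M k j"
      using M k j by (intro eq_matI) (auto simp: mat_delete_def)
    thus "?B $$ (k,j) * cofactor ?B k j = N $$ (k,j) * cofactor M k j"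
      using j k by (simp add: cofactor_def)
  qed
  finally show ?thesis .
qed




lemma smult_smult_mat': "a \<cdot>\<^sub>m (b \<cdot>\<^sub>m A) = (a * b) \<cdot>\<^sub>m (A :: 'a :: comm_ring_1 mat)"
  by (intro eq_matI) auto

lemma one_smult_mat': "1 \<cdot>\<^sub>m A = (A :: 'a :: comm_ring_1 mat)"
  by (intro eq_matI) auto

lemma det_one_smult_expand: assumes B: "B \<in> carrier_mat n n"
  shows "det (1\<^sub>m n + s \<cdot>\<^sub>m B) = det (mat n n (\<lambda>(i,j). (if i = j then 1 else 0) + s * B $$ (i,j)))"
  using B by (intro arg_cong[where f=det] eq_matI) auto

lemma det_pos_path:
  fixes B :: "real mat"
  assumes B: "B \<in> carrier_mat n n" and ne: "\<And>s. 0 \<le> s \<Longrightarrow> s \<le> 1 \<Longrightarrow> det (1\<^sub>m n + s \<cdot>\<^sub>m B) \<noteq> 0"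
  shows "det (1\<^sub>m n + B) > 0"
proof (rule ccontr)
  define h where "h s = det (mat n n (\<lambda>(i,j). (if i = j then 1 else 0) + s * B $$ (i,j)))" for s
  have hB: "h s = det (1\<^sub>m n + s \<cdot>\<^sub>m B)" for s unfolding h_def using det_one_smult_expand[OF B] by simp
  have cont: "isCont h s" for s
  proof -
    have "(h has_real_derivative (\<Sum>k<n. det (mat n n (\<lambda>(i,j). if i = k then B $$ (i,j) else (if i = j then 1 else 0) + s * B $$ (i,j))))) (at s)"
      unfolding h_def by (rule det_deriv) (auto intro!: derivative_eq_intros)
    thus ?thesis by (rule DERIV_isCont)
  qed
  assume "\<not> det (1\<^sub>m n + B) > 0"
  hence "h 1 \<le> 0" using hB[of 1] by (simp add: one_smult_mat')
  moreover have "h 0 = 1"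
  proof -
    have "1\<^sub>m n + 0 \<cdot>\<^sub>m B = 1\<^sub>m n" using B by (intro eq_matI) auto
    thus ?thesis using hB[of 0] by simp
  qed
  ultimately obtain s where s: "0 \<le> s" "s \<le> 1" "h s = 0"
    using IVT2'[of h 1 0 0] cont by (auto intro: continuous_at_imp_continuous_on)
  thus False using ne[OF s(1,2)] hB by simp
qed

lemma map_add_mat: "A \<in> carrier_mat n k \<Longrightarrow> B \<in> carrier_mat n k \<Longrightarrow> map_mat complex_of_real (A + B) = map_mat complex_of_real A + map_mat complex_of_real B"
  by (intro eq_matI) auto

lemma map_smult_real: "map_mat complex_of_real (a \<cdot>\<^sub>m A) = complex_of_real a \<cdot>\<^sub>m map_mat complex_of_real A"
  by (intro eq_matI) auto

lemma map_mult_real: "A \<in> carrier_mat n k \<Longrightarrow> B \<in> carrier_mat k l \<Longrightarrow> map_mat complex_of_real (A * B) = map_mat complex_of_real A * map_mat complex_of_real B"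
  by (rule of_real_hom.mat_hom_mult)

lemma map_transpose_adjoint: "map_mat complex_of_real (transpose_mat A) = mat_adjoint (map_mat complex_of_real A)"
  by (intro eq_matI) (auto simp: mat_adjoint_alt)

lemma det_map_real: "det (map_mat complex_of_real A) = complex_of_real (det A)"
  by (rule of_real_hom.hom_det)

lemma det_M_pos:
  fixes A K :: "real mat"
  assumes A: "A \<in> carrier_mat n q" and K: "K \<in> carrier_mat q q" "diagonal_mat K" "\<forall>j<q. K $$ (j,j) \<ge> 0"
    and a: "a \<ge> 0"
  shows "det (1\<^sub>m n + a \<cdot>\<^sub>m (A * K * transpose_mat A)) > 0"
proof (rule det_pos_path)
  show "a \<cdot>\<^sub>m (A * K * transpose_mat A) \<in> carrier_mat n n" using A K by auto
  fix s :: real assume s: "0 \<le> s" "s \<le> 1"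
  have "complex_of_real (det (1\<^sub>m n + s \<cdot>\<^sub>m (a \<cdot>\<^sub>m (A * K * transpose_mat A)))) =
     det (map_mat complex_of_real (1\<^sub>m n + s \<cdot>\<^sub>m (a \<cdot>\<^sub>m (A * K * transpose_mat A))))"
    by (simp only: det_map_real)
  also have "map_mat complex_of_real (1\<^sub>m n + s \<cdot>\<^sub>m (a \<cdot>\<^sub>m (A * K * transpose_mat A))) =
     1\<^sub>m n + complex_of_real (s * a) \<cdot>\<^sub>m (map_mat complex_of_real A * map_mat complex_of_real K * mat_adjoint (map_mat complex_of_real A))"
  proof -
    have c1: "A * K * transpose_mat A \<in> carrier_mat n n" using A K by auto
    have "map_mat complex_of_real (1\<^sub>m n + s \<cdot>\<^sub>m (a \<cdot>\<^sub>m (A * K * transpose_mat A))) =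
       map_mat complex_of_real (1\<^sub>m n) + map_mat complex_of_real (s \<cdot>\<^sub>m (a \<cdot>\<^sub>m (A * K * transpose_mat A)))"
      using c1 by (intro map_add_mat) auto
    also have "map_mat complex_of_real (1\<^sub>m n) = (1\<^sub>m n :: complex mat)" by (rule of_real_hom.mat_hom_one)
    also have "map_mat complex_of_real (s \<cdot>\<^sub>m (a \<cdot>\<^sub>m (A * K * transpose_mat A))) =
       complex_of_real (s * a) \<cdot>\<^sub>m map_mat complex_of_real (A * K * transpose_mat A)"
      by (simp only: map_smult_real smult_smult_mat' of_real_mult)
    also have "map_mat complex_of_real (A * K * transpose_mat A) = map_mat complex_of_real (A * K) * map_mat complex_of_real (transpose_mat A)"
      using A K by (intro map_mult_real[of _ n q _ n]) auto
    also have "map_mat complex_of_real (A * K) = map_mat complex_of_real A * map_mat complex_of_real K"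
      using A K by (intro map_mult_real[of _ n q _ q]) auto
    finally show ?thesis by (simp only: map_transpose_adjoint)
  qed
  also have "det \<dots> \<noteq> 0"
    using A K a s by (intro S_det_ne0[where q=q]) auto
  finally show "det (1\<^sub>m n + s \<cdot>\<^sub>m (a \<cdot>\<^sub>m (A * K * transpose_mat A))) \<noteq> 0" by simp
qed



definition tr :: "complex mat \<Rightarrow> complex" where "tr X = (\<Sum>k<dim_row X. X $$ (k,k))"

lemma tr_comm: assumes "X \<in> carrier_mat n l" "Y \<in> carrier_mat l n"
  shows "tr (X * Y) = tr (Y * X)"
proof -
  have "tr (X * Y) = (\<Sum>k<n. \<Sum>u<l. X $$ (k,u) * Y $$ (u,k))"
    unfolding tr_def using assms by (intro sum.cong) (auto simp: scalar_prod_def atLeast0LessThan)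
  also have "\<dots> = (\<Sum>u<l. \<Sum>k<n. Y $$ (u,k) * X $$ (k,u))"
    by (subst sum.swap) (simp add: mult.commute)
  also have "\<dots> = tr (Y * X)"
    unfolding tr_def using assms by (intro sum.cong) (auto simp: scalar_prod_def atLeast0LessThan)
  finally show ?thesis .
qed

lemma tr_add: "X \<in> carrier_mat n n \<Longrightarrow> Y \<in> carrier_mat n n \<Longrightarrow> tr (X + Y) = tr X + tr Y"
  unfolding tr_def by (simp add: sum.distrib)

lemma tr_smult: "X \<in> carrier_mat n n \<Longrightarrow> tr (a \<cdot>\<^sub>m X) = a * tr X"
  unfolding tr_def by (simp add: sum_distrib_left)

lemma transpose_smult: "transpose_mat (a \<cdot>\<^sub>m X) = a \<cdot>\<^sub>m transpose_mat (X :: complex mat)"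
  by (intro eq_matI) auto

lemma tr_mult_transpose: assumes "X \<in> carrier_mat n q" "Y \<in> carrier_mat n q"
  shows "tr (X * transpose_mat Y) = (\<Sum>k<n. \<Sum>u<q. X $$ (k,u) * Y $$ (k,u))"
  unfolding tr_def using assms by (intro sum.cong) (auto simp: scalar_prod_def atLeast0LessThan)

lemma trace_identity:
  fixes Ac Kc Ec G Mc Adc :: "complex mat" and \<alpha> d :: complex
  assumes Ac: "Ac \<in> carrier_mat n q" and Kc: "Kc \<in> carrier_mat q q" and Ec: "Ec \<in> carrier_mat n q"
    and G: "G \<in> carrier_mat n q" and Ad: "Adc \<in> carrier_mat n n"
    and Mdef: "Mc = 1\<^sub>m n + \<alpha> \<cdot>\<^sub>m (Ac * Kc * transpose_mat Ac)"
    and Ksym: "transpose_mat Kc = Kc"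
    and MG: "Mc * G = \<alpha> \<cdot>\<^sub>m (Ac * Kc)"
    and AdM: "Adc * Mc = d \<cdot>\<^sub>m 1\<^sub>m n" and MAd: "Mc * Adc = d \<cdot>\<^sub>m 1\<^sub>m n"
  shows "tr ((\<alpha> \<cdot>\<^sub>m (Ec * Kc * transpose_mat Ac + Ac * Kc * transpose_mat Ec)) * Adc)
     = d * 2 * (\<Sum>k<n. \<Sum>u<q. Ec $$ (k,u) * G $$ (k,u))"
proof -
  have Mc: "Mc \<in> carrier_mat n n" unfolding Mdef using Ac Kc by auto
  have Msym: "transpose_mat Mc = Mc"
  proof -
    have "transpose_mat (Ac * Kc * transpose_mat Ac) = Ac * Kc * transpose_mat Ac"
      using Ac Kc by (simp add: transpose_mult[of _ n q _ n] transpose_mult[of _ q q _ n] Ksym)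
    thus ?thesis unfolding Mdef using Ac Kc
      by (subst transpose_add[of _ n n]) (auto simp: transpose_smult)
  qed
  have X1: "Ec * Kc * transpose_mat Ac \<in> carrier_mat n n" using Ec Kc Ac by auto
  have X2: "Ac * Kc * transpose_mat Ec \<in> carrier_mat n n" using Ec Kc Ac by auto
  have split: "(\<alpha> \<cdot>\<^sub>m (Ec * Kc * transpose_mat Ac + Ac * Kc * transpose_mat Ec)) * Adc
     = (\<alpha> \<cdot>\<^sub>m (Ec * Kc * transpose_mat Ac)) * Adc + (\<alpha> \<cdot>\<^sub>m (Ac * Kc * transpose_mat Ec)) * Adc"
    using X1 X2 Ad by (simp add: add_smult_distrib_left_mat[of _ n n] add_mult_distrib_mat[of _ n n])
  have t2: "tr ((\<alpha> \<cdot>\<^sub>m (Ac * Kc * transpose_mat Ec)) * Adc) = d * (\<Sum>k<n. \<Sum>u<q. G $$ (k,u) * Ec $$ (k,u))"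
  proof -
    have "\<alpha> \<cdot>\<^sub>m (Ac * Kc * transpose_mat Ec) = (\<alpha> \<cdot>\<^sub>m (Ac * Kc)) * transpose_mat Ec"
      using Ac Kc Ec by (simp add: mult_smult_assoc_mat[of _ n q _ n])
    also have "\<dots> = (Mc * G) * transpose_mat Ec" by (simp add: MG)
    finally have e1: "\<alpha> \<cdot>\<^sub>m (Ac * Kc * transpose_mat Ec) = (Mc * G) * transpose_mat Ec" .
    have "Adc * ((Mc * G) * transpose_mat Ec) = (Adc * Mc) * (G * transpose_mat Ec)"
    proof -
      have X: "G * transpose_mat Ec \<in> carrier_mat n n" using G Ec by auto
      have "(Mc * G) * transpose_mat Ec = Mc * (G * transpose_mat Ec)"
        using Mc G Ec by (intro assoc_mult_mat[of _ n n _ q _ n]) auto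
      moreover have "Adc * (Mc * (G * transpose_mat Ec)) = (Adc * Mc) * (G * transpose_mat Ec)"
        using Ad Mc X by (intro assoc_mult_mat[of _ n n _ n _ n, symmetric]) auto
      ultimately show ?thesis by simp
    qed
    also have "\<dots> = d \<cdot>\<^sub>m (G * transpose_mat Ec)"
      using G Ec by (simp add: AdM mult_smult_assoc_mat[of _ n n _ n])
    finally have e2: "Adc * (\<alpha> \<cdot>\<^sub>m (Ac * Kc * transpose_mat Ec)) = d \<cdot>\<^sub>m (G * transpose_mat Ec)" unfolding e1 .
    have e3: "tr ((\<alpha> \<cdot>\<^sub>m (Ac * Kc * transpose_mat Ec)) * Adc) = tr (Adc * (\<alpha> \<cdot>\<^sub>m (Ac * Kc * transpose_mat Ec)))"
      using X2 Ad by (intro tr_comm[of _ n n]) auto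
    thus ?thesis unfolding e2 using G Ec by (simp add: tr_smult[of _ n] tr_mult_transpose)
  qed
  have t1: "tr ((\<alpha> \<cdot>\<^sub>m (Ec * Kc * transpose_mat Ac)) * Adc) = d * (\<Sum>k<n. \<Sum>u<q. Ec $$ (k,u) * G $$ (k,u))"
  proof -
    have "\<alpha> \<cdot>\<^sub>m (Kc * transpose_mat Ac) = transpose_mat (\<alpha> \<cdot>\<^sub>m (Ac * Kc))"
      using Ac Kc by (simp add: transpose_smult transpose_mult[of _ n q _ q] Ksym)
    also have "\<dots> = transpose_mat G * Mc"
      using Mc G by (simp add: MG[symmetric] transpose_mult[of _ n n _ q] Msym)
    finally have KA: "\<alpha> \<cdot>\<^sub>m (Kc * transpose_mat Ac) = transpose_mat G * Mc" .
    have "\<alpha> \<cdot>\<^sub>m (Ec * Kc * transpose_mat Ac) = Ec * (\<alpha> \<cdot>\<^sub>m (Kc * transpose_mat Ac))"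
      using Ac Kc Ec by (simp add: mult_smult_distrib[of _ n q _ n])
    also have "\<dots> = Ec * (transpose_mat G * Mc)" by (simp add: KA)
    finally have e1: "\<alpha> \<cdot>\<^sub>m (Ec * Kc * transpose_mat Ac) = Ec * (transpose_mat G * Mc)" .
    have GT: "transpose_mat G \<in> carrier_mat q n" using G by simp
    have "(Ec * (transpose_mat G * Mc)) * Adc = Ec * ((transpose_mat G * Mc) * Adc)"
      using Ec GT Mc Ad by (intro assoc_mult_mat[of _ n q _ n _ n]) auto
    also have "(transpose_mat G * Mc) * Adc = transpose_mat G * (Mc * Adc)"
      using GT Mc Ad by (intro assoc_mult_mat[of _ q n _ n _ n]) auto
    also have "Ec * (transpose_mat G * (Mc * Adc)) = Ec * transpose_mat G * (Mc * Adc)"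
      using Ec GT Mc Ad by (intro assoc_mult_mat[of _ n q _ n _ n, symmetric]) auto
    finally have "(\<alpha> \<cdot>\<^sub>m (Ec * Kc * transpose_mat Ac)) * Adc = Ec * transpose_mat G * (Mc * Adc)"
      unfolding e1 .
    also have "\<dots> = d \<cdot>\<^sub>m (Ec * transpose_mat G)"
      using Ec G by (simp add: MAd mult_smult_distrib[of _ n n _ n])
    finally show ?thesis using G Ec by (simp add: tr_smult[of _ n] tr_mult_transpose)
  qed
  have "tr ((\<alpha> \<cdot>\<^sub>m (Ec * Kc * transpose_mat Ac + Ac * Kc * transpose_mat Ec)) * Adc)
     = tr ((\<alpha> \<cdot>\<^sub>m (Ec * Kc * transpose_mat Ac)) * Adc) + tr ((\<alpha> \<cdot>\<^sub>m (Ac * Kc * transpose_mat Ec)) * Adc)"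
  proof -
    have "(\<alpha> \<cdot>\<^sub>m (Ec * Kc * transpose_mat Ac)) * Adc \<in> carrier_mat n n" by (rule mult_carrier_mat[OF smult_carrier_mat[OF X1] Ad])
    moreover have "(\<alpha> \<cdot>\<^sub>m (Ac * Kc * transpose_mat Ec)) * Adc \<in> carrier_mat n n" by (rule mult_carrier_mat[OF smult_carrier_mat[OF X2] Ad])
    ultimately show ?thesis unfolding split by (rule tr_add)
  qed
  also have "\<dots> = d * 2 * (\<Sum>k<n. \<Sum>u<q. Ec $$ (k,u) * G $$ (k,u))"
  proof -
    have "(\<Sum>k<n. \<Sum>u<q. G $$ (k,u) * Ec $$ (k,u)) = (\<Sum>k<n. \<Sum>u<q. Ec $$ (k,u) * G $$ (k,u))"
      by (simp only: mult.commute)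
    thus ?thesis unfolding t1 t2 by (simp only: mult_2_right distrib_right)
  qed
  finally show ?thesis .
qed



lemma unique_b: assumes T: "T > 0" and a: "a < T" and t: "t < T"
  shows "(\<Sum>b<T. (if nat ((int a - int b) mod int T) = t then x else 0)) = (x :: complex)"
proof -
  define b0 where "b0 = nat ((int a - int t) mod int T)"
  have "(int a - int t) mod int T < int T" using T by simp
  hence b0: "b0 < T" unfolding b0_def using T by (simp add: nat_less_iff)
  have iff: "nat ((int a - int b) mod int T) = t \<longleftrightarrow> b = b0" if b: "b < T" for b
  proof -
    have "nat ((int a - int b) mod int T) = t \<longleftrightarrow> (int a - int b) mod int T = int t mod int T"
      using t T by auto
    also have "\<dots> \<longleftrightarrow> int T dvd (int a - int b - int t)" by (simp add: mod_eq_dvd_iff)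
    also have "\<dots> \<longleftrightarrow> int T dvd (int a - int t - int b)" by (simp add: algebra_simps)
    also have "\<dots> \<longleftrightarrow> (int a - int t) mod int T = int b mod int T" by (simp add: mod_eq_dvd_iff)
    also have "\<dots> \<longleftrightarrow> b = b0" unfolding b0_def using b T by auto
    finally show ?thesis .
  qed
  have "(\<Sum>b<T. (if nat ((int a - int b) mod int T) = t then x else 0)) = (\<Sum>b<T. if b = b0 then x else 0)"
    by (intro sum.cong refl) (simp add: iff)
  also have "\<dots> = x" using b0 by (simp add: sum.delta)
  finally show ?thesis .
qed

lemma delta2: assumes c: "c < (C::nat)" and i: "i < (m::nat)"
  shows "(\<Sum>c'<C. \<Sum>a<T. \<Sum>i'<m. \<Sum>b<T. if c' = c \<and> i' = i then h a b else (0::complex)) = (\<Sum>a<T. \<Sum>b<T. h a b)"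
proof -
  have inner: "(\<Sum>i'<m. \<Sum>b<T. if c' = c \<and> i' = i then h a b else 0) = (if c' = c then (\<Sum>b<T. h a b) else 0)" for c' a
  proof (cases "c' = c")
    case True
    have "(\<Sum>i'<m. \<Sum>b<T. if c' = c \<and> i' = i then h a b else 0) = (\<Sum>i'<m. if i' = i then (\<Sum>b<T. h a b) else 0)"
      using True by (intro sum.cong refl) auto
    also have "\<dots> = (\<Sum>b<T. h a b)" using i by (simp add: sum.delta)
    finally show ?thesis using True by simp
  qed simp
  have "(\<Sum>c'<C. \<Sum>a<T. \<Sum>i'<m. \<Sum>b<T. if c' = c \<and> i' = i then h a b else 0)
     = (\<Sum>c'<C. if c' = c then (\<Sum>a<T. \<Sum>b<T. h a b) else 0)"
    by (intro sum.cong refl) (simp add: inner)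
  also have "\<dots> = (\<Sum>a<T. \<Sum>b<T. h a b)" using c by (simp add: sum.delta)
  finally show ?thesis .
qed

lemma final_sum:
  assumes T: "T > 0" and c: "c < C" and i: "i < m" and t: "t < T"
  shows "(\<Sum>k<C*T. \<Sum>u<m*T. (if k div T = c \<and> u div T = i \<and> nat ((int (k mod T) - int (u mod T)) mod int T) = t then 1 else 0)
      * Phi T C m W $$ (k,u)) = of_nat T * IDFT T W c t i"
proof -
  define g where "g k u = (if k div T = c \<and> u div T = i \<and> nat ((int (k mod T) - int (u mod T)) mod int T) = t then 1 else 0)
      * Phi T C m W $$ (k,u)" for k u
  have "(\<Sum>k<C*T. \<Sum>u<m*T. g k u) = (\<Sum>c'<C. \<Sum>a<T. \<Sum>i'<m. \<Sum>b<T. g (c'*T+a) (i'*T+b))"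
    by (simp add: sum_split)
  also have "\<dots> = (\<Sum>c'<C. \<Sum>a<T. \<Sum>i'<m. \<Sum>b<T. if c' = c \<and> i' = i then g (c*T+a) (i*T+b) else 0)"
  proof (intro sum.cong refl)
    fix c' a i' b assume a: "a \<in> {..<T}" and b: "b \<in> {..<T}"
    have d1: "(c'*T+a) div T = c'" "(c'*T+a) mod T = a" "(i'*T+b) div T = i'" "(i'*T+b) mod T = b"
      using a b by auto
    show "g (c'*T+a) (i'*T+b) = (if c' = c \<and> i' = i then g (c*T+a) (i*T+b) else 0)"
    proof (cases "c' = c \<and> i' = i")
      case False thus ?thesis unfolding g_def d1 by auto
    qed auto
  qed
  also have "\<dots> = (\<Sum>a<T. \<Sum>b<T. g (c*T+a) (i*T+b))"
    by (rule delta2[OF c i])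
  also have "\<dots> = (\<Sum>a<T. \<Sum>b<T. if nat ((int a - int b) mod int T) = t then IDFT T W c t i else 0)"
  proof (intro sum.cong refl)
    fix a b assume a: "a \<in> {..<T}" and b: "b \<in> {..<T}"
    have ct: "c*T+a < C*T"
    proof -
      have "c*T+a < (c+1)*T" using a by simp
      also have "\<dots> \<le> C*T" using c by (intro mult_le_mono1) simp
      finally show ?thesis .
    qed
    have "Phi T C m W $$ (c*T+a, i*T+b) = (1 / of_nat T) * (\<Sum>p<T. W p $$ (c, i) * ee T (int p * (int a - int b)))"
      using T i b a ct by (simp add: Phi_index')
    moreover have "ee T (int p * (int a - int b)) = ee T (int p * int t)" if "nat ((int a - int b) mod int T) = t" for p
    proof -
      have "(int a - int b) mod int T = int t" using that T by auto
      hence "(int p * (int a - int b)) mod int T = (int p * int t) mod int T" by (metis mod_mult_right_eq)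
      thus ?thesis using ee_mod[OF T, of "int p * (int a - int b)"] ee_mod[OF T, of "int p * int t"] by simp
    qed
    ultimately show "g (c*T+a) (i*T+b) = (if nat ((int a - int b) mod int T) = t then IDFT T W c t i else 0)"
      unfolding g_def IDFT_def using a b T by (auto simp: inv_omega_pow)
  qed
  also have "\<dots> = (\<Sum>a<T. IDFT T W c t i)"
    using T t by (intro sum.cong refl unique_b) auto
  also have "\<dots> = of_nat T * IDFT T W c t i" by simp
  finally show ?thesis unfolding g_def .
qed



lemma SW_eq:
  fixes S F P' :: "complex mat"
  assumes S: "S \<in> carrier_mat C C" and dS: "det S \<noteq> 0" and F: "F \<in> carrier_mat C m" and P': "P' \<in> carrier_mat m m"
  shows "S * ((k \<cdot>\<^sub>m mat_inv S) * F * P') = k \<cdot>\<^sub>m (F * P')"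
proof -
  note inv = S_inv[OF S dS]
  have "S * ((k \<cdot>\<^sub>m mat_inv S) * F * P') = (S * ((k \<cdot>\<^sub>m mat_inv S) * F)) * P'"
    using S F P' inv by (intro assoc_mult_mat[of _ C C _ m _ m, symmetric]) auto
  also have "S * ((k \<cdot>\<^sub>m mat_inv S) * F) = (S * (k \<cdot>\<^sub>m mat_inv S)) * F"
    using S F inv by (intro assoc_mult_mat[of _ C C _ C _ m, symmetric]) auto
  also have "S * (k \<cdot>\<^sub>m mat_inv S) = k \<cdot>\<^sub>m 1\<^sub>m C"
    using S inv by (simp add: mult_smult_distrib[of _ C C _ C])
  also have "(k \<cdot>\<^sub>m 1\<^sub>m C) * F = k \<cdot>\<^sub>m F"
    using F by (simp add: mult_smult_assoc_mat[of _ C C _ m])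
  also have "(k \<cdot>\<^sub>m F) * P' = k \<cdot>\<^sub>m (F * P')"
    using F P' by (simp add: mult_smult_assoc_mat[of _ C m _ m])
  finally show ?thesis .
qed

lemma key_MG:
  fixes C T m :: nat and Z :: sigarr and a :: real and P :: "real mat"
  assumes T: "T > 0" and a: "a \<ge> 0" and P: "P \<in> carrier_mat m m" "diagonal_mat P" "\<forall>j<m. P $$ (j,j) \<ge> 0"
  defines "F \<equiv> DFTZ C T m Z" and "P' \<equiv> map_mat complex_of_real P"
  defines "S \<equiv> \<lambda>p. 1\<^sub>m C + complex_of_real a \<cdot>\<^sub>m (F p * P' * mat_adjoint (F p))"
  defines "W \<equiv> \<lambda>p. (complex_of_real a \<cdot>\<^sub>m mat_inv (S p)) * F p * P'"
  shows "(1\<^sub>m (C*T) + complex_of_real a \<cdot>\<^sub>m (map_mat complex_of_real (circZ C T m Z) * map_mat complex_of_real (kron_id T P)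
            * map_mat complex_of_real (transpose_mat (circZ C T m Z)))) * Phi T C m W
       = complex_of_real a \<cdot>\<^sub>m (map_mat complex_of_real (circZ C T m Z) * map_mat complex_of_real (kron_id T P))"
proof -
  have Fc: "F p \<in> carrier_mat C m" for p unfolding F_def by simp
  have Pc: "P' \<in> carrier_mat m m" unfolding P'_def using P by simp
  have FA: "mat_adjoint (F p) \<in> carrier_mat m C" for p using Fc[of p] mat_adjoint_carrier[of "F p"] by simp
  have Sc: "S p \<in> carrier_mat C C" for p unfolding S_def using Fc[of p] Pc FA[of p] by auto
  have dS: "det (S p) \<noteq> 0" for p unfolding S_def P'_def using Fc P a by (intro S_det_ne0) auto
  have Wc: "W p \<in> carrier_mat C m" for p unfolding W_def by (rule mult_carrier_mat[OF mult_carrier_mat[OF smult_carrier_mat[OF S_inv(2)[OF Sc dS]] Fc] Pc])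
  have AK: "map_mat complex_of_real (circZ C T m Z) * map_mat complex_of_real (kron_id T P) = Phi T C m (\<lambda>p. F p * P')"
    unfolding circ_Phi[OF T] kron_Phi[OF T P(1)] F_def[symmetric] P'_def[symmetric]
    using Fc Pc by (intro Phi_mult[OF T]) (auto intro: mult_carrier_mat)
  have AKA: "map_mat complex_of_real (circZ C T m Z) * map_mat complex_of_real (kron_id T P)
            * map_mat complex_of_real (transpose_mat (circZ C T m Z)) = Phi T C C (\<lambda>p. F p * P' * mat_adjoint (F p))"
    unfolding AK circT_Phi[OF T] F_def[symmetric]
    using Fc Pc FA by (intro Phi_mult[OF T]) (auto intro: mult_carrier_mat)
  have M: "1\<^sub>m (C*T) + complex_of_real a \<cdot>\<^sub>m (map_mat complex_of_real (circZ C T m Z) * map_mat complex_of_real (kron_id T P)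
            * map_mat complex_of_real (transpose_mat (circZ C T m Z))) = Phi T C C S"
  proof -
    have "Phi T C C S = Phi T C C (\<lambda>p. 1\<^sub>m C) + Phi T C C (\<lambda>p. complex_of_real a \<cdot>\<^sub>m (F p * P' * mat_adjoint (F p)))"
      unfolding S_def using Fc Pc FA by (intro Phi_add) (auto intro!: smult_carrier_mat intro: mult_carrier_mat)
    also have "Phi T C C (\<lambda>p. complex_of_real a \<cdot>\<^sub>m (F p * P' * mat_adjoint (F p))) = complex_of_real a \<cdot>\<^sub>m Phi T C C (\<lambda>p. F p * P' * mat_adjoint (F p))"
      using Fc Pc FA by (intro Phi_smult) (auto intro: mult_carrier_mat)
    finally show ?thesis unfolding AKA Phi_one[OF T] by simp
  qed
  have "Phi T C C S * Phi T C m W = Phi T C m (\<lambda>p. S p * W p)"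
    using Sc Wc by (intro Phi_mult[OF T])
  also have "(\<lambda>p. S p * W p) = (\<lambda>p. complex_of_real a \<cdot>\<^sub>m (F p * P'))"
    unfolding W_def using Sc dS Fc Pc by (intro ext SW_eq)
  also have "Phi T C m (\<lambda>p. complex_of_real a \<cdot>\<^sub>m (F p * P')) = complex_of_real a \<cdot>\<^sub>m Phi T C m (\<lambda>p. F p * P')"
    using Fc Pc by (intro Phi_smult) (auto intro: mult_carrier_mat)
  finally have X: "Phi T C C S * Phi T C m W = complex_of_real a \<cdot>\<^sub>m Phi T C m (\<lambda>p. F p * P')" .
  show ?thesis by (subst M) (simp only: AK X)
qed



lemma idx_one_smult: "Y \<in> carrier_mat n n \<Longrightarrow> k < n \<Longrightarrow> j < n \<Longrightarrow>
  (1\<^sub>m n + a \<cdot>\<^sub>m Y) $$ (k,j) = (if k = j then 1 else 0) + a * Y $$ (k,j)"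
  by auto

lemma prod3_index: fixes X K Y :: "'a::comm_ring_1 mat"
  assumes X: "X \<in> carrier_mat n q" and K: "K \<in> carrier_mat q q" and Y: "Y \<in> carrier_mat n q" and k: "k < n" and j: "j < n"
  shows "(X * K * transpose_mat Y) $$ (k,j) = (\<Sum>u<q. (\<Sum>v<q. X $$ (k,v) * K $$ (v,u)) * Y $$ (j,u))"
proof -
  have XK: "X * K \<in> carrier_mat n q" using X K by (rule mult_carrier_mat)
  have "(X * K * transpose_mat Y) $$ (k,j) = (\<Sum>u<q. (X * K) $$ (k,u) * transpose_mat Y $$ (u,j))"
    using XK Y k j by (intro mult_index_sum[of _ n q]) auto
  also have "\<dots> = (\<Sum>u<q. (\<Sum>v<q. X $$ (k,v) * K $$ (v,u)) * Y $$ (j,u))"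
  proof (rule sum.cong[OF refl])
    fix u assume u: "u \<in> {..<q}"
    have "(X * K) $$ (k,u) = (\<Sum>v<q. X $$ (k,v) * K $$ (v,u))" using X K k u by (intro mult_index_sum) auto
    thus "(X * K) $$ (k,u) * transpose_mat Y $$ (u,j) = (\<Sum>v<q. X $$ (k,v) * K $$ (v,u)) * Y $$ (j,u)"
      using Y u j by simp
  qed
  finally show ?thesis .
qed

lemma map_transpose_real: "map_mat complex_of_real (transpose_mat A) = transpose_mat (map_mat complex_of_real A)"
  by (intro eq_matI) auto

lemma core:
  fixes C T m :: nat and Z :: sigarr and a :: real and P :: "real mat" and c t i :: nat
  assumes T: "T > 0" and a: "a > 0" and P: "P \<in> carrier_mat m m" "diagonal_mat P" "\<forall>j<m. P $$ (j,j) \<ge> 0"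
    and c: "c < C" and t: "t < T" and i: "i < m"
  shows "\<exists>D. ((\<lambda>s. ln (det (1\<^sub>m (C * T) + a \<cdot>\<^sub>m
                   (circZ C T m (perturb Z c t i s) * kron_id T P
                     * transpose_mat (circZ C T m (perturb Z c t i s)))))) has_real_derivative D) (at 0)
      \<and> complex_of_real (D / (2 * real T)) = IDFT T (\<lambda>p. (complex_of_real a \<cdot>\<^sub>m
                mat_inv (1\<^sub>m C + complex_of_real a \<cdot>\<^sub>m
                  (DFTZ C T m Z p * map_mat complex_of_real P * mat_adjoint (DFTZ C T m Z p)))) * DFTZ C T m Z p * map_mat complex_of_real P) c t i"
proof -
  define n where "n = C * T"
  define q where "q = m * T"
  define A where "A = circZ C T m Z"
  define K where "K = kron_id T P"
  define E :: "real mat" where "E = mat n q (\<lambda>(k,u). if k div T = c \<and> u div T = i \<and> nat ((int (k mod T) - int (u mod T)) mod int T) = t then 1 else 0)"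
  define As where "As s = circZ C T m (perturb Z c t i s)" for s
  define M0 where "M0 = 1\<^sub>m n + a \<cdot>\<^sub>m (A * K * transpose_mat A)"
  have Ac: "A \<in> carrier_mat n q" unfolding A_def circZ_def n_def q_def by (simp add: mult.commute)
  have Kc: "K \<in> carrier_mat q q" unfolding K_def kron_id_def q_def using P by simp
  have Ec: "E \<in> carrier_mat n q" unfolding E_def by simp
  have M0c: "M0 \<in> carrier_mat n n" unfolding M0_def using Ac Kc by auto
  have Kdiag: "diagonal_mat K"
    unfolding diagonal_mat_def
  proof (intro allI impI)
    fix r s assume r: "r < dim_row K" and s: "s < dim_col K" and rs: "r \<noteq> s"
    have "r div T < m" "s div T < m" using r s Kc unfolding q_def by (auto simp: less_mult_imp_div_less)
    moreover have "r mod T = s mod T \<Longrightarrow> r div T \<noteq> s div T" using rs by (metis div_mult_mod_eq)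
    ultimately show "K $$ (r,s) = 0" using r s Kc P(1,2) unfolding K_def kron_id_def diagonal_mat_def q_def
      by auto
  qed
  have Kpos: "\<forall>j<q. K $$ (j,j) \<ge> 0"
    using P unfolding K_def kron_id_def q_def by (auto simp: less_mult_imp_div_less)
  have Ksym: "transpose_mat K = K"
    using Kdiag Kc unfolding diagonal_mat_def by (intro eq_matI) (auto, metis)
  have As_eq: "As s $$ (k,u) = A $$ (k,u) + s * E $$ (k,u)" if "k < n" "u < q" for s k u
    using that unfolding As_def A_def E_def circZ_def perturb_def n_def q_def
    by (auto simp: mult.commute)
  have Asc: "As s \<in> carrier_mat n q" for s unfolding As_def circZ_def n_def q_def by (simp add: mult.commute)
  define f where "f s k j = (if k = j then 1 else 0) + a * (\<Sum>u<q. (\<Sum>v<q. (A $$ (k,v) + s * E $$ (k,v)) * K $$ (v,u)) * (A $$ (j,u) + s * E $$ (j,u)))" for s k j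
  have Mf: "1\<^sub>m n + a \<cdot>\<^sub>m (As s * K * transpose_mat (As s)) = mat n n (\<lambda>(k,j). f s k j)" for s
  proof (rule eq_matI)
    fix k j assume "k < dim_row (mat n n (\<lambda>(k,j). f s k j))" "j < dim_col (mat n n (\<lambda>(k,j). f s k j))"
    hence k: "k < n" and j: "j < n" by auto
    have "(As s * K * transpose_mat (As s)) $$ (k,j) = (\<Sum>u<q. (As s * K) $$ (k,u) * transpose_mat (As s) $$ (u,j))"
      using Asc Kc k j by (intro mult_index_sum[of _ n q]) (auto intro: mult_carrier_mat)
    also have "\<dots> = (\<Sum>u<q. (\<Sum>v<q. (A $$ (k,v) + s * E $$ (k,v)) * K $$ (v,u)) * (A $$ (j,u) + s * E $$ (j,u)))"
    proof (rule sum.cong[OF refl])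
      fix u assume u: "u \<in> {..<q}"
      have "(As s * K) $$ (k,u) = (\<Sum>v<q. As s $$ (k,v) * K $$ (v,u))"
        using Asc Kc k u by (intro mult_index_sum[of _ n q]) auto
      also have "\<dots> = (\<Sum>v<q. (A $$ (k,v) + s * E $$ (k,v)) * K $$ (v,u))"
        using k by (intro sum.cong refl) (simp add: As_eq)
      finally show "(As s * K) $$ (k,u) * transpose_mat (As s) $$ (u,j) = (\<Sum>v<q. (A $$ (k,v) + s * E $$ (k,v)) * K $$ (v,u)) * (A $$ (j,u) + s * E $$ (j,u))"
        using u j Asc[of s] by (simp add: As_eq)
    qed
    finally have e: "(As s * K * transpose_mat (As s)) $$ (k,j) = (\<Sum>u<q. (\<Sum>v<q. (A $$ (k,v) + s * E $$ (k,v)) * K $$ (v,u)) * (A $$ (j,u) + s * E $$ (j,u)))" .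
    have X: "As s * K * transpose_mat (As s) \<in> carrier_mat n n"
      by (rule mult_carrier_mat[OF mult_carrier_mat[OF Asc Kc]]) (simp add: Asc[of s])
    show "(1\<^sub>m n + a \<cdot>\<^sub>m (As s * K * transpose_mat (As s))) $$ (k,j) = mat n n (\<lambda>(k,j). f s k j) $$ (k,j)"
      unfolding idx_one_smult[OF X k j] e using k j unfolding f_def by simp
  qed (use Asc Kc in auto)
  have M0f: "mat n n (\<lambda>(k,j). f 0 k j) = M0"
  proof -
    have "As 0 = A" unfolding As_def A_def perturb_def by simp
    thus ?thesis using Mf[of 0] unfolding M0_def by simp
  qed
  define Nf where "Nf k j = a * (\<Sum>u<q. (\<Sum>v<q. E $$ (k,v) * K $$ (v,u)) * A $$ (j,u) + (\<Sum>v<q. A $$ (k,v) * K $$ (v,u)) * E $$ (j,u))" for k j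
  have fd: "((\<lambda>s. f s k j) has_real_derivative Nf k j) (at 0)" for k j
    unfolding f_def Nf_def
    by (auto intro!: derivative_eq_intros simp: sum.distrib sum_distrib_right algebra_simps)
  define dD where "dD = (\<Sum>k<n. \<Sum>j<n. Nf k j * cofactor M0 k j)"
  have ddet: "((\<lambda>s. det (mat n n (\<lambda>(k,j). f s k j))) has_real_derivative dD) (at 0)"
  proof -
    have "((\<lambda>s. det (mat n n (\<lambda>(k,j). f s k j))) has_real_derivative
       (\<Sum>k<n. det (mat n n (\<lambda>(i,j). if i = k then Nf i j else f 0 i j)))) (at 0)"
      by (rule det_deriv) (rule fd)
    also have "(\<Sum>k<n. det (mat n n (\<lambda>(i,j). if i = k then Nf i j else f 0 i j))) = dD"
      unfolding dD_def
    proof (rule sum.cong[OF refl])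
      fix k assume k: "k \<in> {..<n}"
      have "mat n n (\<lambda>(i,j). if i = k then Nf i j else f 0 i j) =
         mat n n (\<lambda>(i,j). if i = k then mat n n (\<lambda>(i,j). Nf i j) $$ (i,j) else M0 $$ (i,j))"
        by (intro eq_matI) (auto simp: M0f[symmetric])
      also have "det \<dots> = (\<Sum>j<n. mat n n (\<lambda>(i,j). Nf i j) $$ (k,j) * cofactor M0 k j)"
        using M0c k by (intro det_replace_row) auto
      finally show "det (mat n n (\<lambda>(i,j). if i = k then Nf i j else f 0 i j)) = (\<Sum>j<n. Nf k j * cofactor M0 k j)"
        using k by simp
    qed
    finally show ?thesis .
  qed
  have dpos: "det M0 > 0" unfolding M0_def using Ac Kc Kdiag Kpos a by (intro det_M_pos) auto
  define D where "D = inverse (det M0) * dD"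
  have fun_eq: "(\<lambda>s. ln (det (1\<^sub>m (C * T) + a \<cdot>\<^sub>m
                   (circZ C T m (perturb Z c t i s) * kron_id T P
                     * transpose_mat (circZ C T m (perturb Z c t i s))))))
      = (\<lambda>s. ln (det (mat n n (\<lambda>(k,j). f s k j))))"
    using Mf unfolding As_def K_def n_def by simp
  have deriv: "((\<lambda>s. ln (det (1\<^sub>m (C * T) + a \<cdot>\<^sub>m
                   (circZ C T m (perturb Z c t i s) * kron_id T P
                     * transpose_mat (circZ C T m (perturb Z c t i s)))))) has_real_derivative D) (at 0)"
    unfolding fun_eq D_def
  proof (rule DERIV_chain2[OF _ ddet])
    show "DERIV ln (det (mat n n (\<lambda>(k,j). f 0 k j))) :> inverse (det M0)"
      unfolding M0f using dpos by (rule DERIV_ln)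
  qed
  show ?thesis
  proof (intro exI conjI)
    show "((\<lambda>s. ln (det (1\<^sub>m (C * T) + a \<cdot>\<^sub>m
                   (circZ C T m (perturb Z c t i s) * kron_id T P
                     * transpose_mat (circZ C T m (perturb Z c t i s)))))) has_real_derivative D) (at 0)"
      by (rule deriv)
    show "complex_of_real (D / (2 * real T)) = IDFT T (\<lambda>p. (complex_of_real a \<cdot>\<^sub>m
                mat_inv (1\<^sub>m C + complex_of_real a \<cdot>\<^sub>m
                  (DFTZ C T m Z p * map_mat complex_of_real P * mat_adjoint (DFTZ C T m Z p)))) * DFTZ C T m Z p * map_mat complex_of_real P) c t i"
    proof -
      define F where "F = DFTZ C T m Z"
      define P' where "P' = map_mat complex_of_real P"
      define W where "W = (\<lambda>p. (complex_of_real a \<cdot>\<^sub>m mat_inv (1\<^sub>m C + complex_of_real a \<cdot>\<^sub>m (F p * P' * mat_adjoint (F p)))) * F p * P')"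
      define G where "G = Phi T C m W"
      define Nm where "Nm = mat n n (\<lambda>(k,j). Nf k j)"
      define Adc where "Adc = map_mat complex_of_real (adj_mat M0)"
      define Acx where "Acx = map_mat complex_of_real A"
      define Kcx where "Kcx = map_mat complex_of_real K"
      define Ecx where "Ecx = map_mat complex_of_real E"
      have Acx: "Acx \<in> carrier_mat n q" unfolding Acx_def using Ac by simp
      have Kcx: "Kcx \<in> carrier_mat q q" unfolding Kcx_def using Kc by simp
      have Ecx: "Ecx \<in> carrier_mat n q" unfolding Ecx_def using Ec by simp
      have Gc: "G \<in> carrier_mat n q" unfolding G_def n_def q_def by simp
      have adj: "adj_mat M0 \<in> carrier_mat n n" "M0 * adj_mat M0 = det M0 \<cdot>\<^sub>m 1\<^sub>m n" "adj_mat M0 * M0 = det M0 \<cdot>\<^sub>m 1\<^sub>m n"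
        using adj_mat[OF M0c] by auto
      have Adcc: "Adc \<in> carrier_mat n n" unfolding Adc_def using adj(1) by simp
      have Mc_def: "map_mat complex_of_real M0 = 1\<^sub>m n + complex_of_real a \<cdot>\<^sub>m (Acx * Kcx * transpose_mat Acx)"
      proof -
        have c1: "A * K * transpose_mat A \<in> carrier_mat n n" using Ac Kc by (intro mult_carrier_mat[OF mult_carrier_mat]) auto
        have "map_mat complex_of_real M0 = map_mat complex_of_real (1\<^sub>m n) + map_mat complex_of_real (a \<cdot>\<^sub>m (A * K * transpose_mat A))"
          unfolding M0_def using c1 by (intro map_add_mat) auto
        also have "map_mat complex_of_real (1\<^sub>m n) = (1\<^sub>m n :: complex mat)" by (rule of_real_hom.mat_hom_one)
        also have "map_mat complex_of_real (a \<cdot>\<^sub>m (A * K * transpose_mat A)) = complex_of_real a \<cdot>\<^sub>m map_mat complex_of_real (A * K * transpose_mat A)"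
          by (rule map_smult_real)
        also have "map_mat complex_of_real (A * K * transpose_mat A) = map_mat complex_of_real (A * K) * map_mat complex_of_real (transpose_mat A)"
          using Ac Kc by (intro map_mult_real[of _ n q _ n]) (auto intro: mult_carrier_mat)
        also have "map_mat complex_of_real (A * K) = Acx * Kcx"
          unfolding Acx_def Kcx_def using Ac Kc by (intro map_mult_real[of _ n q _ q]) auto
        finally show ?thesis unfolding Acx_def map_transpose_real by simp
      qed
      have KsymC: "transpose_mat Kcx = Kcx" unfolding Kcx_def map_transpose_real[symmetric] Ksym ..
      have MG: "map_mat complex_of_real M0 * G = complex_of_real a \<cdot>\<^sub>m (Acx * Kcx)"
        using key_MG[where C=C and Z=Z, OF T less_imp_le[OF a] P] unfolding Mc_def G_def W_def F_def P'_def Acx_def Kcx_def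
          A_def K_def n_def map_transpose_real by simp
      have AdM: "Adc * map_mat complex_of_real M0 = complex_of_real (det M0) \<cdot>\<^sub>m 1\<^sub>m n"
      proof -
        have "Adc * map_mat complex_of_real M0 = map_mat complex_of_real (adj_mat M0 * M0)"
          unfolding Adc_def using adj(1) M0c by (intro map_mult_real[symmetric])
        also have "\<dots> = complex_of_real (det M0) \<cdot>\<^sub>m 1\<^sub>m n" unfolding adj(3) map_smult_real by (simp only: of_real_hom.mat_hom_one)
        finally show ?thesis .
      qed
      have MAd: "map_mat complex_of_real M0 * Adc = complex_of_real (det M0) \<cdot>\<^sub>m 1\<^sub>m n"
      proof -
        have "map_mat complex_of_real M0 * Adc = map_mat complex_of_real (M0 * adj_mat M0)"
          unfolding Adc_def using adj(1) M0c by (intro map_mult_real[symmetric])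
        also have "\<dots> = complex_of_real (det M0) \<cdot>\<^sub>m 1\<^sub>m n" unfolding adj(2) map_smult_real by (simp only: of_real_hom.mat_hom_one)
        finally show ?thesis .
      qed
      have Nm_eq: "map_mat complex_of_real Nm = complex_of_real a \<cdot>\<^sub>m (Ecx * Kcx * transpose_mat Acx + Acx * Kcx * transpose_mat Ecx)"
      proof (rule eq_matI)
        fix k j assume "k < dim_row (complex_of_real a \<cdot>\<^sub>m (Ecx * Kcx * transpose_mat Acx + Acx * Kcx * transpose_mat Ecx))"
          "j < dim_col (complex_of_real a \<cdot>\<^sub>m (Ecx * Kcx * transpose_mat Acx + Acx * Kcx * transpose_mat Ecx))"
        hence k: "k < n" and j: "j < n" using Ecx Acx by auto
        have "(complex_of_real a \<cdot>\<^sub>m (Ecx * Kcx * transpose_mat Acx + Acx * Kcx * transpose_mat Ecx)) $$ (k,j)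
          = complex_of_real a * ((Ecx * Kcx * transpose_mat Acx) $$ (k,j) + (Acx * Kcx * transpose_mat Ecx) $$ (k,j))"
          using k j Ecx Acx by simp
        also have "\<dots> = complex_of_real a * ((\<Sum>u<q. (\<Sum>v<q. Ecx $$ (k,v) * Kcx $$ (v,u)) * Acx $$ (j,u)) + (\<Sum>u<q. (\<Sum>v<q. Acx $$ (k,v) * Kcx $$ (v,u)) * Ecx $$ (j,u)))"
          by (simp only: prod3_index[OF Ecx Kcx Acx k j] prod3_index[OF Acx Kcx Ecx k j])
        also have "\<dots> = complex_of_real (Nf k j)"
          unfolding Nf_def Ecx_def Kcx_def Acx_def using k j Ac Kc Ec
          by (simp add: sum.distrib)
        finally show "map_mat complex_of_real Nm $$ (k,j) = (complex_of_real a \<cdot>\<^sub>m (Ecx * Kcx * transpose_mat Acx + Acx * Kcx * transpose_mat Ecx)) $$ (k,j)"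
          unfolding Nm_def using k j by simp
      qed (use Ecx Acx in \<open>auto simp: Nm_def\<close>)
      have trN: "tr (map_mat complex_of_real Nm * Adc) = complex_of_real dD"
      proof -
        have "tr (map_mat complex_of_real Nm * Adc) = (\<Sum>k<n. (map_mat complex_of_real Nm * Adc) $$ (k,k))"
          unfolding tr_def Nm_def by simp
        also have "\<dots> = (\<Sum>k<n. \<Sum>j<n. complex_of_real (Nf k j * cofactor M0 k j))"
        proof (rule sum.cong[OF refl])
          fix k assume k: "k \<in> {..<n}"
          have "(map_mat complex_of_real Nm * Adc) $$ (k,k) = (\<Sum>j<n. map_mat complex_of_real Nm $$ (k,j) * Adc $$ (j,k))"
            using Adcc k by (intro mult_index_sum[of _ n n]) (auto simp: Nm_def)
          also have "\<dots> = (\<Sum>j<n. complex_of_real (Nf k j * cofactor M0 k j))"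
            using k M0c unfolding Nm_def Adc_def adj_mat_def by (intro sum.cong refl) auto
          finally show "(map_mat complex_of_real Nm * Adc) $$ (k,k) = (\<Sum>j<n. complex_of_real (Nf k j * cofactor M0 k j))" .
        qed
        also have "\<dots> = complex_of_real dD" unfolding dD_def by simp
        finally show ?thesis .
      qed
      have main: "complex_of_real dD = complex_of_real (det M0) * 2 * (of_nat T * IDFT T W c t i)"
      proof -
        have "complex_of_real dD = complex_of_real (det M0) * 2 * (\<Sum>k<n. \<Sum>u<q. Ecx $$ (k,u) * G $$ (k,u))"
          unfolding trN[symmetric] Nm_eq
          by (rule trace_identity[OF Acx Kcx Ecx Gc Adcc Mc_def KsymC MG AdM MAd])
        also have "(\<Sum>k<n. \<Sum>u<q. Ecx $$ (k,u) * G $$ (k,u)) =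
          (\<Sum>k<C*T. \<Sum>u<m*T. (if k div T = c \<and> u div T = i \<and> nat ((int (k mod T) - int (u mod T)) mod int T) = t then 1 else 0)
            * Phi T C m W $$ (k,u))"
          unfolding n_def q_def G_def Ecx_def E_def by (intro sum.cong refl) (auto simp: n_def q_def)
        also have "\<dots> = of_nat T * IDFT T W c t i" by (rule final_sum[OF T c i t])
        finally show ?thesis .
      qed
      have "complex_of_real (D / (2 * real T)) = complex_of_real dD / (complex_of_real (det M0) * 2 * of_nat T)"
        unfolding D_def by (simp add: field_simps)
      also have "\<dots> = IDFT T W c t i"
        unfolding main using dpos T by (simp add: field_simps)
      finally show ?thesis unfolding W_def F_def P'_def .
    qed
  qed
qed



lemma kron_one: "kron_id T (1\<^sub>m m) = 1\<^sub>m (m * T)"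
proof (rule eq_matI)
  fix r s assume "r < dim_row (1\<^sub>m (m * T) :: real mat)" "s < dim_col (1\<^sub>m (m * T) :: real mat)"
  hence r: "r < m*T" and s: "s < m*T" by auto
  have "r div T < m" "s div T < m" using r s by (auto simp: less_mult_imp_div_less)
  moreover have "(r mod T = s mod T \<and> r div T = s div T) \<longleftrightarrow> r = s" by (metis div_mult_mod_eq)
  ultimately show "kron_id T (1\<^sub>m m) $$ (r, s) = 1\<^sub>m (m * T) $$ (r, s)"
    using r s unfolding kron_id_def by auto
qed (auto simp: kron_id_def)

lemma circ_one: "circZ C T m X * kron_id T (1\<^sub>m m) = circZ C T m X"
proof -
  have "dim_col (circZ C T m X) = m * T" unfolding circZ_def by (simp add: mult.commute)
  thus ?thesis unfolding kron_one by simp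
qed

theorem theorem3:
  fixes C T m k :: nat and Z :: sigarr and \<alpha> :: real
    and \<alpha>j \<gamma> :: "nat \<Rightarrow> real" and Pi :: "nat \<Rightarrow> real mat"
  assumes "C > 0" and "T > 0" and "m > 0"
    and "\<alpha> > 0"
    and "\<forall>j\<in>{1..k}. \<alpha>j j > 0 \<and> Pi j \<in> carrier_mat m m \<and> diagonal_mat (Pi j)
                      \<and> (\<forall>i<m. Pi j $$ (i, i) \<ge> 0)"
  shows
    "let F = DFTZ C T m Z;
         E = (\<lambda>p. complex_of_real \<alpha> \<cdot>\<^sub>m
                mat_inv (1\<^sub>m C + complex_of_real \<alpha> \<cdot>\<^sub>m (F p * mat_adjoint (F p))));
         Cj = (\<lambda>j p. complex_of_real (\<alpha>j j) \<cdot>\<^sub>m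
                mat_inv (1\<^sub>m C + complex_of_real (\<alpha>j j) \<cdot>\<^sub>m
                  (F p * map_mat complex_of_real (Pi j) * mat_adjoint (F p))));
         U = (\<lambda>p. E p * F p);
         W = (\<lambda>j p. Cj j p * F p)
     in (\<forall>c<C. \<forall>t<T. \<forall>i<m.
           \<exists>D. ((\<lambda>s. ln (det (1\<^sub>m (C * T) + \<alpha> \<cdot>\<^sub>m
                   (circZ C T m (perturb Z c t i s) * transpose_mat (circZ C T m (perturb Z c t i s))))))
                 has_real_derivative D) (at 0)
              \<and> complex_of_real (D / (2 * real T)) = IDFT T U c t i)
      \<and> (\<forall>j\<in>{1..k}. \<forall>c<C. \<forall>t<T. \<forall>i<m.
           \<exists>D. ((\<lambda>s. ln (det (1\<^sub>m (C * T) + \<alpha>j j \<cdot>\<^sub>m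
                   (circZ C T m (perturb Z c t i s) * kron_id T (Pi j)
                     * transpose_mat (circZ C T m (perturb Z c t i s))))))
                 has_real_derivative D) (at 0)
              \<and> complex_of_real (\<gamma> j * D / (2 * real T))
                  = complex_of_real (\<gamma> j) * IDFT T (\<lambda>p. W j p * map_mat complex_of_real (Pi j)) c t i)"
proof -
  note T = \<open>T > 0\<close>
  have part1: "\<exists>D. ((\<lambda>s. ln (det (1\<^sub>m (C * T) + \<alpha> \<cdot>\<^sub>m
                   (circZ C T m (perturb Z c t i s) * transpose_mat (circZ C T m (perturb Z c t i s))))))
                 has_real_derivative D) (at 0)
              \<and> complex_of_real (D / (2 * real T)) = IDFT T (\<lambda>p. (complex_of_real \<alpha> \<cdot>\<^sub>m
                mat_inv (1\<^sub>m C + complex_of_real \<alpha> \<cdot>\<^sub>m (DFTZ C T m Z p * mat_adjoint (DFTZ C T m Z p)))) * DFTZ C T m Z p) c t i"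
    if c: "c < C" and t: "t < T" and i: "i < m" for c t i
  proof -
    have P1: "(1\<^sub>m m :: real mat) \<in> carrier_mat m m" "diagonal_mat (1\<^sub>m m :: real mat)" "\<forall>j<m. (1\<^sub>m m :: real mat) $$ (j,j) \<ge> 0"
      by (auto simp: diagonal_mat_def)
    from core[OF T \<open>\<alpha> > 0\<close> P1 c t i, of Z]
    obtain D where D: "((\<lambda>s. ln (det (1\<^sub>m (C * T) + \<alpha> \<cdot>\<^sub>m
                   (circZ C T m (perturb Z c t i s) * kron_id T (1\<^sub>m m)
                     * transpose_mat (circZ C T m (perturb Z c t i s)))))) has_real_derivative D) (at 0)"
      "complex_of_real (D / (2 * real T)) = IDFT T (\<lambda>p. (complex_of_real \<alpha> \<cdot>\<^sub>m
                mat_inv (1\<^sub>m C + complex_of_real \<alpha> \<cdot>\<^sub>m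
                  (DFTZ C T m Z p * map_mat complex_of_real (1\<^sub>m m) * mat_adjoint (DFTZ C T m Z p)))) * DFTZ C T m Z p * map_mat complex_of_real (1\<^sub>m m)) c t i"
      by blast
    have o: "map_mat complex_of_real (1\<^sub>m m) = (1\<^sub>m m :: complex mat)" by (rule of_real_hom.mat_hom_one)
    have f1: "DFTZ C T m Z p * 1\<^sub>m m = DFTZ C T m Z p" for p by simp
    have f2: "X * DFTZ C T m Z p * 1\<^sub>m m = X * DFTZ C T m Z p" for X p by simp
    show ?thesis using D unfolding circ_one o f1 f2 by blast
  qed
  have part2: "\<exists>D. ((\<lambda>s. ln (det (1\<^sub>m (C * T) + \<alpha>j j \<cdot>\<^sub>m
                   (circZ C T m (perturb Z c t i s) * kron_id T (Pi j)
                     * transpose_mat (circZ C T m (perturb Z c t i s))))))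
                 has_real_derivative D) (at 0)
              \<and> complex_of_real (\<gamma> j * D / (2 * real T))
                  = complex_of_real (\<gamma> j) * IDFT T (\<lambda>p. (complex_of_real (\<alpha>j j) \<cdot>\<^sub>m
                mat_inv (1\<^sub>m C + complex_of_real (\<alpha>j j) \<cdot>\<^sub>m
                  (DFTZ C T m Z p * map_mat complex_of_real (Pi j) * mat_adjoint (DFTZ C T m Z p)))) * DFTZ C T m Z p * map_mat complex_of_real (Pi j)) c t i"
    if j: "j \<in> {1..k}" and c: "c < C" and t: "t < T" and i: "i < m" for j c t i
  proof -
    have aj: "\<alpha>j j > 0" and Pj: "Pi j \<in> carrier_mat m m" "diagonal_mat (Pi j)" "\<forall>i<m. Pi j $$ (i, i) \<ge> 0"
      using assms(5) j by auto
    from core[OF T aj Pj c t i, of Z]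
    obtain D where D: "((\<lambda>s. ln (det (1\<^sub>m (C * T) + \<alpha>j j \<cdot>\<^sub>m
                   (circZ C T m (perturb Z c t i s) * kron_id T (Pi j)
                     * transpose_mat (circZ C T m (perturb Z c t i s)))))) has_real_derivative D) (at 0)"
      "complex_of_real (D / (2 * real T)) = IDFT T (\<lambda>p. (complex_of_real (\<alpha>j j) \<cdot>\<^sub>m
                mat_inv (1\<^sub>m C + complex_of_real (\<alpha>j j) \<cdot>\<^sub>m
                  (DFTZ C T m Z p * map_mat complex_of_real (Pi j) * mat_adjoint (DFTZ C T m Z p)))) * DFTZ C T m Z p * map_mat complex_of_real (Pi j)) c t i"
      by blast
    have e: "complex_of_real (\<gamma> j * D / (2 * real T)) = complex_of_real (\<gamma> j) * complex_of_real (D / (2 * real T))"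
      by simp
    show ?thesis
      by (intro exI[of _ D] conjI D(1)) (simp only: e D(2))
  qed
  show ?thesis unfolding Let_def using part1 part2 by blast
qed


end
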